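(* Let $V\in C^3(\mathbb{R}^3)$ satisfy (U) or (U'), and fix $\varepsilon>0$. Let $(r(t),u(t))$, $t\ge0$, be a global solution of the effective equation $\dot r=u$, $m(u)\dot u=-\nabla V(r)+\varepsilon a(u)\ddot u+\varepsilon b(u,\dot u)$ such that $\sup_{t\ge0}|u(t)|\le\bar u(\varepsilon)<1$ and $\sup_{t\ge0}|\dot u(t)|\le c(\varepsilon)$ for some constants $\bar u(\varepsilon)$, $c(\varepsilon)$. Then $\dot u(t)\to0$, $\ddot u(t)\to0$ and $\nabla V(r(t))\to0$ as $t\to\infty$.
   Context: (U): $\inf V>-\infty$ and $\sup_q(|V|+|\nabla V|+|\nabla^2V|+|\nabla^3V|)<\infty$. (U'): $V(q)\to\infty$ as $|q|\to\infty$. $\rho\in C_0^\infty(\mathbb{R}^3)$ radial, $\mathsf e=\int\rho\neq0$, $\hat\rho(k)=(2\pi)^{-3/2}\int\rho e^{-ik\cdot x}$. For $|u|<1$: $\gamma=(1-|u|^2)^{-1/2}$, $m_0(u)w=\gamma w+\gamma^3(u\cdot w)u$, $m_e=\frac13\int|\hat\rho|^2|k|^{-2}dk$, $\varphi(s)=\frac{1}{2s^2(1-s^2)}-\frac{1}{4s^3}\log\frac{1+s}{1-s}$, $m_f(u)w=3m_e(\varphi(|u|)w+|u|^{-1}\varphi'(|u|)(u\cdot w)u)$, $m=m_0+m_f$, $a(u)w=\frac{\mathsf e^2}{12\pi}[\gamma^4w+4\gamma^6(u\cdot w)u]$, $b(u,w)=\frac{\mathsf e^2}{4\pi}[2\gamma^6(u\cdot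 w)w+\gamma^6|w|^2u+6\gamma^8(u\cdot w)^2u]$. *)

theory Defs
  imports "HOL-Analysis.Analysis"
begin

fun Dpart :: "'n::finite list \<Rightarrow> (real^'n \<Rightarrow> real) \<Rightarrow> real^'n \<Rightarrow> real" where
  "Dpart [] f = f"
| "Dpart (i # is) f = (\<lambda>x. deriv (\<lambda>t. Dpart is f (x + t *\<^sub>R axis i 1)) 0)"

definition Ck :: "nat \<Rightarrow> (real^'n::finite \<Rightarrow> real) \<Rightarrow> bool" where
  "Ck k f \<longleftrightarrow>
     (\<forall>is. length is \<le> k \<longrightarrow> continuous_on UNIV (Dpart is f)) \<and>
     (\<forall>is i x. length is < k \<longrightarrow>
        (\<lambda>t. Dpart is f (x + t *\<^sub>R axis i 1)) differentiable (at 0))"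

definition grad :: "(real^'n::finite \<Rightarrow> real) \<Rightarrow> real^'n \<Rightarrow> real^'n" where
  "grad f x = (\<chi> i. Dpart [i] f x)"

definition cond_U :: "(real^3 \<Rightarrow> real) \<Rightarrow> bool" where
  "cond_U V \<longleftrightarrow> bdd_below (range V) \<and>
     (\<forall>is::3 list. length is \<le> 3 \<longrightarrow> bounded (range (Dpart is V)))"

definition cond_U' :: "(real^3 \<Rightarrow> real) \<Rightarrow> bool" where
  "cond_U' V \<longleftrightarrow> filterlim V at_top at_infinity"

definition admissible_rho :: "(real^3 \<Rightarrow> real) \<Rightarrow> bool" where
  "admissible_rho \<rho> \<longleftrightarrow> (\<forall>k. Ck k \<rho>) \<and> bounded {x. \<rho> x \<noteq> 0} \<and>
     (\<forall>x y. norm x = norm y \<longrightarrow> \<rho> x = \<rho> y)"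

definition charge :: "(real^3 \<Rightarrow> real) \<Rightarrow> real" where
  "charge \<rho> = integral UNIV \<rho>"

definition rho_hat :: "(real^3 \<Rightarrow> real) \<Rightarrow> real^3 \<Rightarrow> complex" where
  "rho_hat \<rho> k = complex_of_real ((2 * pi) powr (-3/2)) *
      integral UNIV (\<lambda>x. complex_of_real (\<rho> x) * cis (- (k \<bullet> x)))"

definition m_e :: "(real^3 \<Rightarrow> real) \<Rightarrow> real" where
  "m_e \<rho> = 1/3 * integral UNIV (\<lambda>k. (cmod (rho_hat \<rho> k))\<^sup>2 / (norm k)\<^sup>2)"

definition gam :: "real^3 \<Rightarrow> real" where
  "gam u = 1 / sqrt (1 - (norm u)\<^sup>2)"

definition phi :: "real \<Rightarrow> real" where
  "phi s = 1 / (2 * s\<^sup>2 * (1 - s\<^sup>2)) - 1 / (4 * s ^ 3) * ln ((1 + s) / (1 - s))"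

definition m0 :: "real^3 \<Rightarrow> real^3 \<Rightarrow> real^3" where
  "m0 u w = gam u *\<^sub>R w + ((gam u) ^ 3 * (u \<bullet> w)) *\<^sub>R u"

(* m_f, extended continuously to u = 0 (phi(0+) = 1/3) *)
definition mf :: "(real^3 \<Rightarrow> real) \<Rightarrow> real^3 \<Rightarrow> real^3 \<Rightarrow> real^3" where
  "mf \<rho> u w = (if u = 0 then m_e \<rho> *\<^sub>R w
     else (3 * m_e \<rho>) *\<^sub>R (phi (norm u) *\<^sub>R w
            + (deriv phi (norm u) / norm u * (u \<bullet> w)) *\<^sub>R u))"

definition mass :: "(real^3 \<Rightarrow> real) \<Rightarrow> real^3 \<Rightarrow> real^3 \<Rightarrow> real^3" where
  "mass \<rho> u w = m0 u w + mf \<rho> u w"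

definition acoef :: "(real^3 \<Rightarrow> real) \<Rightarrow> real^3 \<Rightarrow> real^3 \<Rightarrow> real^3" where
  "acoef \<rho> u w = ((charge \<rho>)\<^sup>2 / (12 * pi)) *\<^sub>R
      ((gam u) ^ 4 *\<^sub>R w + (4 * (gam u) ^ 6 * (u \<bullet> w)) *\<^sub>R u)"

definition bcoef :: "(real^3 \<Rightarrow> real) \<Rightarrow> real^3 \<Rightarrow> real^3 \<Rightarrow> real^3" where
  "bcoef \<rho> u w = ((charge \<rho>)\<^sup>2 / (4 * pi)) *\<^sub>R
      ((2 * (gam u) ^ 6 * (u \<bullet> w)) *\<^sub>R w + ((gam u) ^ 6 * (norm w)\<^sup>2) *\<^sub>R u
       + (6 * (gam u) ^ 8 * (u \<bullet> w)\<^sup>2) *\<^sub>R u)"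

end

theory Submission
  imports Defs "HOL-Real_Asymp.Real_Asymp"
begin

lemma partial_at0:
  fixes f :: "real^'n::finite \<Rightarrow> real"
  assumes diff: "\<And>x. (\<lambda>t. f (x + t *\<^sub>R axis i 1)) differentiable (at 0)"
  shows "((\<lambda>t. f (x + t *\<^sub>R axis i 1)) has_real_derivative Dpart [i] f x) (at 0)"
  using diff[of x] by (simp add: DERIV_deriv_iff_real_differentiable)

lemma partial_line:
  fixes f :: "real^'n::finite \<Rightarrow> real"
  assumes diff: "\<And>x. (\<lambda>t. f (x + t *\<^sub>R axis i 1)) differentiable (at 0)"
  shows "((\<lambda>t. f (y + t *\<^sub>R axis i 1)) has_real_derivative Dpart [i] f (y + s *\<^sub>R axis i 1)) (at s)"
proof -
  have "((\<lambda>t. f ((y + s *\<^sub>R axis i 1) + t *\<^sub>R axis i 1)) has_real_derivative Dpart [i] f (y + s *\<^sub>R axis i 1)) (at 0)"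
    by (rule partial_at0[OF diff])
  hence "((\<lambda>t. f (y + (t + s) *\<^sub>R axis i 1)) has_real_derivative Dpart [i] f (y + s *\<^sub>R axis i 1)) (at 0)"
    by (simp add: scaleR_add_left algebra_simps)
  hence "((\<lambda>t. f (y + t *\<^sub>R axis i 1)) has_real_derivative Dpart [i] f (y + s *\<^sub>R axis i 1)) (at (0 + s))"
    using DERIV_shift[of "\<lambda>t. f (y + t *\<^sub>R axis i 1)" _ 0 s] by simp
  thus ?thesis by simp
qed

lemma mvt_sym:
  fixes g g' :: "real \<Rightarrow> real"
  assumes "\<And>t. (g has_real_derivative g' t) (at t)"
  shows "\<exists>\<theta>. \<bar>\<theta>\<bar> \<le> \<bar>s\<bar> \<and> g s - g 0 = s * g' \<theta>"
proof (cases "s = 0")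
  case True thus ?thesis by (intro exI[of _ 0]) auto
next
  case False
  show ?thesis
  proof (cases "s > 0")
    case True
    from MVT2[OF True] assms obtain z where "z > 0" "z < s" "g s - g 0 = (s - 0) * g' z" by blast
    thus ?thesis by (intro exI[of _ z]) auto
  next
    case False
    with \<open>s \<noteq> 0\<close> have "s < 0" by auto
    from MVT2[OF this] assms obtain z where "z > s" "z < 0" "g 0 - g s = (0 - s) * g' z" by blast
    thus ?thesis by (intro exI[of _ z]) (auto simp: algebra_simps)
  qed
qed

lemma mvt_line:
  fixes f :: "real^'n::finite \<Rightarrow> real"
  assumes diff: "\<And>x. (\<lambda>t. f (x + t *\<^sub>R axis i 1)) differentiable (at 0)"
  shows "\<exists>\<theta>. \<bar>\<theta>\<bar> \<le> \<bar>s\<bar> \<and> f (y + s *\<^sub>R axis i 1) - f y = s * Dpart [i] f (y + \<theta> *\<^sub>R axis i 1)"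
  using mvt_sym[of "\<lambda>t. f (y + t *\<^sub>R axis i 1)" "\<lambda>t. Dpart [i] f (y + t *\<^sub>R axis i 1)" s]
    partial_line[OF diff] by simp

definition proj :: "'n::finite set \<Rightarrow> real^'n \<Rightarrow> real^'n" where
  "proj S h = (\<chi> i. if i \<in> S then h$i else 0)"

lemma proj_insert: "j \<notin> S \<Longrightarrow> proj (insert j S) h = proj S h + h$j *\<^sub>R axis j 1"
  by (simp add: proj_def vec_eq_iff axis_def)

lemma grad_cont:
  fixes f :: "real^'n::finite \<Rightarrow> real"
  assumes cont: "\<And>i. continuous_on UNIV (Dpart [i] f)"
  shows "continuous_on UNIV (grad f)"
  unfolding grad_def by (intro continuous_on_vec_lambda cont)

lemma frechet:
  fixes f :: "real^'n::finite \<Rightarrow> real"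
  assumes diff: "\<And>i x. (\<lambda>t. f (x + t *\<^sub>R axis i 1)) differentiable (at 0)"
    and cont: "\<And>i. continuous_on UNIV (Dpart [i] f)"
  shows "(f has_derivative (\<lambda>h. grad f x \<bullet> h)) (at x)"
  unfolding has_derivative_at_alt
proof (intro conjI allI impI)
  show "bounded_linear ((\<bullet>) (grad f x))" by (rule bounded_linear_inner_right)
  fix e :: real assume e: "e > 0"
  define e' where "e' = e / real CARD('n)"
  have e': "e' > 0" using e by (simp add: e'_def)
  have "isCont (grad f) x" using grad_cont[OF cont] by (simp add: continuous_on_eq_continuous_at)
  then obtain d where d: "d > 0" "\<And>z. dist z x < d \<Longrightarrow> dist (grad f z) (grad f x) < e'"
    using e' continuous_at_eps_delta[of x "grad f"] by blast
  have pd: "\<bar>Dpart [i] f z - Dpart [i] f x\<bar> \<le> e'" if "norm (z - x) < d" for z i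
  proof -
    have "dist (grad f z) (grad f x) < e'" using d(2) that by (simp add: dist_norm)
    moreover have "\<bar>(grad f z - grad f x)$i\<bar> \<le> norm (grad f z - grad f x)" by (rule component_le_norm_cart)
    ultimately show ?thesis by (simp add: grad_def dist_norm)
  qed
  have key: "\<forall>h. norm h < d \<longrightarrow> \<bar>f (x + proj S h) - f x - (\<Sum>i\<in>S. Dpart [i] f x * h$i)\<bar> \<le> real (card S) * e' * norm h"
    if "finite S" for S
    using that
  proof (induction S rule: finite_induct)
    case empty
    have "proj {} h = 0" for h :: "real^'n" by (simp add: proj_def vec_eq_iff)
    thus ?case by simp
  next
    case (insert j S)
    show ?case
    proof (intro allI impI)
    fix h :: "real^'n" assume h: "norm h < d"
    obtain \<theta> where th: "\<bar>\<theta>\<bar> \<le> \<bar>h$j\<bar>"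
      "f (x + proj S h + h$j *\<^sub>R axis j 1) - f (x + proj S h) = h$j * Dpart [j] f (x + proj S h + \<theta> *\<^sub>R axis j 1)"
      using mvt_line[OF diff, where i=j and s="h$j" and y="x + proj S h"] by blast
    have "norm (proj S h + \<theta> *\<^sub>R axis j 1) \<le> norm h"
      apply (rule norm_le_componentwise_cart)
      using th(1) insert.hyps(2) by (auto simp: proj_def axis_def)
    hence "norm ((x + proj S h + \<theta> *\<^sub>R axis j 1) - x) < d" using h by (simp add: algebra_simps)
    hence pj: "\<bar>Dpart [j] f (x + proj S h + \<theta> *\<^sub>R axis j 1) - Dpart [j] f x\<bar> \<le> e'" by (rule pd)
    have hj: "\<bar>h$j\<bar> \<le> norm h" by (rule component_le_norm_cart)
    have "\<bar>h$j * Dpart [j] f (x + proj S h + \<theta> *\<^sub>R axis j 1) - Dpart [j] f x * h$j\<bar>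
          = \<bar>h$j\<bar> * \<bar>Dpart [j] f (x + proj S h + \<theta> *\<^sub>R axis j 1) - Dpart [j] f x\<bar>"
      by (simp only: abs_mult[symmetric] algebra_simps)
    also have "\<dots> \<le> norm h * e'" using pj hj by (intro mult_mono) auto
    finally have A: "\<bar>h$j * Dpart [j] f (x + proj S h + \<theta> *\<^sub>R axis j 1) - Dpart [j] f x * h$j\<bar> \<le> e' * norm h"
      by (simp only: mult.commute)
    have B: "\<bar>f (x + proj S h) - f x - (\<Sum>i\<in>S. Dpart [i] f x * h$i)\<bar> \<le> real (card S) * e' * norm h"
      using insert.IH h by blast
    have sum: "(\<Sum>i\<in>insert j S. Dpart [i] f x * h$i) = Dpart [j] f x * h$j + (\<Sum>i\<in>S. Dpart [i] f x * h$i)"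
      by (rule sum.insert[OF insert.hyps])
    have eq: "f (x + proj (insert j S) h) - f x - (\<Sum>i\<in>insert j S. Dpart [i] f x * h$i)
       = (h$j * Dpart [j] f (x + proj S h + \<theta> *\<^sub>R axis j 1) - Dpart [j] f x * h$j)
         + (f (x + proj S h) - f x - (\<Sum>i\<in>S. Dpart [i] f x * h$i))"
      using th(2) insert.hyps unfolding sum proj_insert[OF insert.hyps(2)] by (simp only: add.assoc)
    have cs: "real (card (insert j S)) = real (card S) + 1" using insert.hyps by simp
    have "\<bar>f (x + proj (insert j S) h) - f x - (\<Sum>i\<in>insert j S. Dpart [i] f x * h$i)\<bar>
       \<le> e' * norm h + real (card S) * e' * norm h"
      unfolding eq using A B abs_triangle_ineq by (smt (verit))
    also have "\<dots> = real (card (insert j S)) * e' * norm h" unfolding cs by (simp add: algebra_simps)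
    finally show "\<bar>f (x + proj (insert j S) h) - f x - (\<Sum>i\<in>insert j S. Dpart [i] f x * h$i)\<bar> \<le> real (card (insert j S)) * e' * norm h" .
    qed
  qed
  show "\<exists>d>0. \<forall>y. norm (y - x) < d \<longrightarrow> norm (f y - f x - grad f x \<bullet> (y - x)) \<le> e * norm (y - x)"
  proof (intro exI[of _ d] conjI allI impI d(1))
    fix y assume y: "norm (y - x) < d"
    have pu: "proj UNIV (y - x) = y - x" by (simp add: proj_def vec_eq_iff)
    have gi: "grad f x \<bullet> (y - x) = (\<Sum>i\<in>UNIV. Dpart [i] f x * (y - x)$i)"
      by (simp add: inner_vec_def grad_def)
    have "\<bar>f (x + proj UNIV (y - x)) - f x - (\<Sum>i\<in>UNIV. Dpart [i] f x * (y - x)$i)\<bar> \<le> real (card (UNIV::'n set)) * e' * norm (y - x)"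
      using key[of UNIV, rule_format, OF _ y] by simp
    thus "norm (f y - f x - grad f x \<bullet> (y - x)) \<le> e * norm (y - x)"
      using pu gi by (simp add: e'_def)
  qed
qed

definition phid :: "real \<Rightarrow> real" where
 "phid s = - (4 * s - 8 * s ^ 3) / (2 * s ^ 2 - 2 * s ^ 4) ^ 2 - 1 / (2 * s ^ 3 * (1 - s ^ 2))
           + 3 * ln ((1 + s) / (1 - s)) / (4 * s ^ 4)"

lemma ln_deriv:
  assumes "0 < s" "s < 1"
  shows "((\<lambda>s. ln ((1 + s) / (1 - s))) has_real_derivative 2 / ((1 + s) * (1 - s))) (at s)"
proof -
  have q: "((\<lambda>s. (1 + s) / (1 - s)) has_real_derivative ((1 - s) + (1 + s)) / ((1 - s) * (1 - s))) (at s)"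
  proof -
    have "((\<lambda>s. (1 + s) / (1 - s)) has_real_derivative (1 * (1 - s) - (1 + s) * (- 1)) / ((1 - s) * (1 - s))) (at s)"
    proof (rule DERIV_divide)
      show "((\<lambda>s. 1 + s) has_real_derivative 1) (at s)" by (rule derivative_eq_intros refl | simp)+
      show "((\<lambda>s. 1 - s) has_real_derivative -1) (at s)" by (rule derivative_eq_intros refl | simp)+
    qed (use assms in auto)
    thus ?thesis by (simp add: algebra_simps)
  qed
  have p: "(1 + s) / (1 - s) > 0" using assms by simp
  have "((\<lambda>s. ln ((1 + s) / (1 - s))) has_real_derivative (1 / ((1 + s) / (1 - s))) * (((1 - s) + (1 + s)) / ((1 - s) * (1 - s)))) (at s)"
    by (rule DERIV_chain2[OF DERIV_ln_divide[OF p] q])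
  moreover have "(1 / ((1 + s) / (1 - s))) * (((1 - s) + (1 + s)) / ((1 - s) * (1 - s))) = 2 / ((1 + s) * (1 - s))"
  proof -
    have a: "1 - s \<noteq> 0" "1 + s \<noteq> 0" using assms by auto
    have "(1 / ((1 + s) / (1 - s))) * (((1 - s) + (1 + s)) / ((1 - s) * (1 - s))) = ((1 - s) / (1 + s)) * (2 / ((1 - s) * (1 - s)))"
      by simp
    also have "\<dots> = 2 / ((1 + s) * (1 - s))" using a by (simp add: divide_simps)
    finally show ?thesis .
  qed
  ultimately show ?thesis by simp
qed

lemma phi_deriv:
  assumes "0 < s" "s < 1"
  shows "(phi has_real_derivative phid s) (at s)"
proof -
  define L where "L = ln ((1 + s) / (1 - s))"
  have s2: "1 - s\<^sup>2 > 0" using assms mult_strict_mono[of s 1 s 1] by (simp add: power2_eq_square)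
  have dA: "((\<lambda>s. 1 / (2 * s\<^sup>2 * (1 - s\<^sup>2))) has_real_derivative
       (0 * (2 * s\<^sup>2 * (1 - s\<^sup>2)) - 1 * (4 * s - 8 * s ^ 3)) / ((2 * s\<^sup>2 * (1 - s\<^sup>2)) * (2 * s\<^sup>2 * (1 - s\<^sup>2)))) (at s)"
  proof (rule DERIV_divide)
    show "((\<lambda>s. 2 * s\<^sup>2 * (1 - s\<^sup>2)) has_real_derivative 4 * s - 8 * s ^ 3) (at s)"
      by (rule derivative_eq_intros refl | simp)+ (simp add: algebra_simps power2_eq_square power3_eq_cube)
  qed (use assms s2 in auto)
  have dB: "((\<lambda>s. 1 / (4 * s ^ 3)) has_real_derivative
       (0 * (4 * s ^ 3) - 1 * (12 * s\<^sup>2)) / ((4 * s ^ 3) * (4 * s ^ 3))) (at s)"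
  proof (rule DERIV_divide)
    show "((\<lambda>s. 4 * s ^ 3) has_real_derivative 12 * s\<^sup>2) (at s)"
      by (rule derivative_eq_intros refl | simp)+
  qed (use assms in auto)
  have d: "(phi has_real_derivative
      (0 * (2 * s\<^sup>2 * (1 - s\<^sup>2)) - 1 * (4 * s - 8 * s ^ 3)) / ((2 * s\<^sup>2 * (1 - s\<^sup>2)) * (2 * s\<^sup>2 * (1 - s\<^sup>2)))
      - ((0 * (4 * s ^ 3) - 1 * (12 * s\<^sup>2)) / ((4 * s ^ 3) * (4 * s ^ 3)) * ln ((1 + s) / (1 - s))
         + 2 / ((1 + s) * (1 - s)) * (1 / (4 * s ^ 3)))) (at s)"
    unfolding phi_def[abs_def]
    by (intro DERIV_diff DERIV_mult dA dB ln_deriv assms)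
  have e1: "(0 * (2 * s\<^sup>2 * (1 - s\<^sup>2)) - 1 * (4 * s - 8 * s ^ 3)) / ((2 * s\<^sup>2 * (1 - s\<^sup>2)) * (2 * s\<^sup>2 * (1 - s\<^sup>2)))
     = - (4 * s - 8 * s ^ 3) / (2 * s ^ 2 - 2 * s ^ 4) ^ 2"
    by (simp add: power2_eq_square algebra_simps power4_eq_xxxx)
  have e2: "(0 * (4 * s ^ 3) - 1 * (12 * s\<^sup>2)) / ((4 * s ^ 3) * (4 * s ^ 3)) = - (3 / (4 * s ^ 4))"
    using assms by (simp add: field_simps power2_eq_square power3_eq_cube power4_eq_xxxx)
  have e3: "2 / ((1 + s) * (1 - s)) * (1 / (4 * s ^ 3)) = 1 / (2 * s ^ 3 * (1 - s ^ 2))"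
  proof -
    have q: "(1 + s) * (1 - s) * (4 * s ^ 3) = 2 * (2 * s ^ 3 * (1 - s ^ 2))"
      by (simp add: algebra_simps power2_eq_square)
    have "2 / ((1 + s) * (1 - s)) * (1 / (4 * s ^ 3)) = 2 / ((1 + s) * (1 - s) * (4 * s ^ 3))" by simp
    also have "\<dots> = 2 / (2 * (2 * s ^ 3 * (1 - s ^ 2)))" by (simp only: q)
    also have "\<dots> = 1 / (2 * s ^ 3 * (1 - s ^ 2))" by simp
    finally show ?thesis .
  qed
  have "(0 * (2 * s\<^sup>2 * (1 - s\<^sup>2)) - 1 * (4 * s - 8 * s ^ 3)) / ((2 * s\<^sup>2 * (1 - s\<^sup>2)) * (2 * s\<^sup>2 * (1 - s\<^sup>2)))
      - ((0 * (4 * s ^ 3) - 1 * (12 * s\<^sup>2)) / ((4 * s ^ 3) * (4 * s ^ 3)) * ln ((1 + s) / (1 - s))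
         + 2 / ((1 + s) * (1 - s)) * (1 / (4 * s ^ 3))) = phid s"
    unfolding e1 e2 e3 phid_def by simp
  with d show ?thesis by simp
qed

lemma bdd_right0:
  fixes f :: "real \<Rightarrow> real"
  assumes lim: "(f \<longlongrightarrow> L) (at_right 0)" and cont: "continuous_on {0<..<1} f" and b: "b < 1"
  shows "\<exists>B. \<forall>s. 0 < s \<and> s \<le> b \<longrightarrow> \<bar>f s\<bar> \<le> B"
proof -
  have "eventually (\<lambda>s. dist (f s) L < 1) (at_right 0)" using tendstoD[OF lim] by simp
  then obtain d where d: "d > 0" "\<And>s. s > 0 \<Longrightarrow> s < d \<Longrightarrow> dist (f s) L < 1"
    unfolding eventually_at_right_field by auto
  have "continuous_on {d/2..b} f" by (rule continuous_on_subset[OF cont]) (use d b in auto)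
  hence "compact (f ` {d/2..b})" by (intro compact_continuous_image) auto
  then obtain B2 where B2: "\<And>y. y \<in> f ` {d/2..b} \<Longrightarrow> \<bar>y\<bar> \<le> B2"
    using compact_imp_bounded bounded_real by metis
  show ?thesis
  proof (intro exI[of _ "max B2 (\<bar>L\<bar> + 1)"] allI impI)
    fix s assume s: "0 < s \<and> s \<le> b"
    show "\<bar>f s\<bar> \<le> max B2 (\<bar>L\<bar> + 1)"
    proof (cases "s < d")
      case True
      hence "dist (f s) L < 1" using d s by auto
      thus ?thesis by (simp add: dist_real_def)
    next
      case False
      hence "f s \<in> f ` {d/2..b}" using s d by auto
      thus ?thesis using B2 by fastforce
    qed
  qed
qed

lemma sq_lt1: "0 < x \<Longrightarrow> x < 1 \<Longrightarrow> x\<^sup>2 < (1::real)"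
  using mult_strict_mono[of x 1 x 1] by (simp add: power2_eq_square)

lemma quart_pos: "0 < x \<Longrightarrow> x < 1 \<Longrightarrow> 2 * x ^ 2 - 2 * x ^ 4 > (0::real)"
proof -
  assume a: "0 < x" "x < 1"
  have "2 * x ^ 2 - 2 * x ^ 4 = 2 * x\<^sup>2 * (1 - x\<^sup>2)" by (simp add: algebra_simps power2_eq_square power4_eq_xxxx)
  thus ?thesis using a sq_lt1[OF a] by simp
qed

lemma phi_cont: "continuous_on {0<..<1} phi"
  unfolding phi_def[abs_def]
  by (intro continuous_intros) (auto, (use sq_lt1 quart_pos in force)+)

lemma phid_cont: "continuous_on {0<..<1} phid"
  unfolding phid_def[abs_def]
proof (intro continuous_intros ballI)
  fix x :: real assume "x \<in> {0<..<1}"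
  then have x: "0 < x" "x < 1" by auto
  show "(2 * x\<^sup>2 - 2 * x ^ 4)\<^sup>2 \<noteq> 0" using quart_pos[OF x] by simp
  show "2 * x ^ 3 * (1 - x\<^sup>2) \<noteq> 0" using x sq_lt1[OF x] by simp
  show "1 - x \<noteq> 0" using x by simp
  show "(1 + x) / (1 - x) \<noteq> 0" using x by simp
  show "4 * x ^ 4 \<noteq> 0" using x by simp
qed

lemma phi_lim: "(phi \<longlongrightarrow> 1/3) (at_right 0)"
  unfolding phi_def[abs_def] by real_asymp

lemma phid_lim: "((\<lambda>s. phid s / s) \<longlongrightarrow> 4/5) (at_right 0)"
  unfolding phid_def[abs_def] by real_asymp

lemma phi_bdd: "b < 1 \<Longrightarrow> \<exists>B. \<forall>s. 0 < s \<and> s \<le> b \<longrightarrow> \<bar>phi s\<bar> \<le> B"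
  by (rule bdd_right0[OF phi_lim phi_cont])

lemma phid_bdd: "b < 1 \<Longrightarrow> \<exists>B. \<forall>s. 0 < s \<and> s \<le> b \<longrightarrow> \<bar>phid s / s\<bar> \<le> B"
  by (rule bdd_right0[OF phid_lim]) (intro continuous_intros phid_cont, auto)

lemma gam_pos: "norm u < 1 \<Longrightarrow> 0 < 1 - (norm u)\<^sup>2"
  using sq_lt1[of "norm u"] by (cases "u = 0") auto

lemma gam_ge1: "norm u < 1 \<Longrightarrow> gam u \<ge> 1"
proof -
  assume a: "norm u < 1"
  have "sqrt (1 - (norm u)\<^sup>2) \<le> 1" by simp
  moreover have "sqrt (1 - (norm u)\<^sup>2) > 0" using gam_pos[OF a] by simp
  ultimately show ?thesis unfolding gam_def by simp
qed

lemma gam_le: "norm u \<le> ub \<Longrightarrow> ub < 1 \<Longrightarrow> gam u \<le> 1 / sqrt (1 - ub\<^sup>2)"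
proof -
  assume a: "norm u \<le> ub" "ub < 1"
  have "\<bar>ub\<bar> < 1" using a norm_ge_zero[of u] by linarith
  hence p: "0 < 1 - ub\<^sup>2" using abs_square_less_1[of ub] by simp
  have "(norm u)\<^sup>2 \<le> ub\<^sup>2" using a by (simp add: power_mono)
  hence "sqrt (1 - ub\<^sup>2) \<le> sqrt (1 - (norm u)\<^sup>2)" by simp
  thus ?thesis unfolding gam_def using p by (simp add: frac_le)
qed

lemma gam_sq: "norm u < 1 \<Longrightarrow> (gam u)\<^sup>2 * (1 - (norm u)\<^sup>2) = 1"
  using gam_pos[of u] unfolding gam_def by (simp add: power_divide)

lemma norm2_le: "norm (a *\<^sub>R w + b *\<^sub>R v) \<le> \<bar>a\<bar> * norm w + \<bar>b\<bar> * norm v"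
  by (metis norm_scaleR norm_triangle_ineq)

lemma inner_bd: "\<bar>u \<bullet> w\<bar> \<le> norm u * norm (w :: 'a :: real_inner)"
  by (rule Cauchy_Schwarz_ineq2)

lemma mass_bound:
  assumes ub: "ub < 1"
  shows "\<exists>M. \<forall>u w. norm u \<le> ub \<longrightarrow> norm (mass \<rho> u w) \<le> M * norm w"
proof -
  obtain P where P: "\<And>s. 0 < s \<Longrightarrow> s \<le> ub \<Longrightarrow> \<bar>phi s\<bar> \<le> P" using phi_bdd[OF ub] by blast
  obtain Q where Q: "\<And>s. 0 < s \<Longrightarrow> s \<le> ub \<Longrightarrow> \<bar>phid s / s\<bar> \<le> Q" using phid_bdd[OF ub] by blast
  define g where "g = 1 / sqrt (1 - ub\<^sup>2)"
  define M where "M = (g + g^3) + 3 * \<bar>m_e \<rho>\<bar> * (\<bar>P\<bar> + \<bar>Q\<bar>) + \<bar>m_e \<rho>\<bar>"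
  show ?thesis
  proof (intro exI[of _ M] allI impI)
    fix u w :: "real^3" assume u: "norm u \<le> ub"
    have u1: "norm u < 1" using u ub by simp
    have g1: "1 \<le> gam u" by (rule gam_ge1[OF u1])
    have g2: "gam u \<le> g" unfolding g_def by (rule gam_le[OF u ub])
    have nu: "norm u \<le> 1" using u1 by simp
    have A: "norm (m0 u w) \<le> (g + g^3) * norm w"
    proof -
      have "norm (m0 u w) \<le> \<bar>gam u\<bar> * norm w + \<bar>gam u ^ 3 * (u \<bullet> w)\<bar> * norm u"
        unfolding m0_def by (rule norm2_le)
      also have "\<dots> \<le> g * norm w + g^3 * norm w"
      proof (intro add_mono)
        show "\<bar>gam u\<bar> * norm w \<le> g * norm w" using g1 g2 by (intro mult_right_mono) auto
        have "\<bar>gam u ^ 3 * (u \<bullet> w)\<bar> * norm u = gam u ^ 3 * (\<bar>u \<bullet> w\<bar> * norm u)"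
          using g1 by (simp add: abs_mult)
        also have "\<dots> \<le> g^3 * (norm w)"
        proof (rule mult_mono)
          show "gam u ^ 3 \<le> g ^ 3" using g1 g2 by (intro power_mono) auto
          have "\<bar>u \<bullet> w\<bar> * norm u \<le> (norm u * norm w) * 1" using inner_bd[of u w] nu
            by (intro mult_mono) auto
          also have "\<dots> \<le> norm w" using nu by (simp add: mult_left_le_one_le)
          finally show "\<bar>u \<bullet> w\<bar> * norm u \<le> norm w" .
        qed (use g1 g2 in auto)
        finally show "\<bar>gam u ^ 3 * (u \<bullet> w)\<bar> * norm u \<le> g ^ 3 * norm w" .
      qed
      finally show ?thesis by (simp add: algebra_simps)
    qed
    have B: "norm (mf \<rho> u w) \<le> (3 * \<bar>m_e \<rho>\<bar> * (\<bar>P\<bar> + \<bar>Q\<bar>) + \<bar>m_e \<rho>\<bar>) * norm w"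
    proof (cases "u = 0")
      case True thus ?thesis by (simp add: mf_def algebra_simps)
    next
      case False
      define s where "s = norm u"
      have s: "0 < s" "s \<le> ub" using False u by (auto simp: s_def)
      have "norm (mf \<rho> u w) = \<bar>3 * m_e \<rho>\<bar> * norm (phi s *\<^sub>R w + (deriv phi s / s * (u \<bullet> w)) *\<^sub>R u)"
        using False by (simp add: mf_def s_def)
      also have "\<dots> \<le> \<bar>3 * m_e \<rho>\<bar> * (\<bar>phi s\<bar> * norm w + \<bar>deriv phi s / s * (u \<bullet> w)\<bar> * norm u)"
        by (intro mult_left_mono norm2_le) auto
      also have "\<dots> \<le> \<bar>3 * m_e \<rho>\<bar> * (\<bar>P\<bar> * norm w + \<bar>Q\<bar> * norm w)"
      proof (intro mult_left_mono add_mono)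
        show "\<bar>phi s\<bar> * norm w \<le> \<bar>P\<bar> * norm w" using P[OF s] by (intro mult_right_mono) auto
        have ds: "deriv phi s = phid s" using phi_deriv[of s] s ub by (intro DERIV_imp_deriv) auto
        have "\<bar>deriv phi s / s * (u \<bullet> w)\<bar> * norm u = \<bar>phid s / s\<bar> * (\<bar>u \<bullet> w\<bar> * norm u)"
          by (simp add: ds abs_mult)
        also have "\<dots> \<le> \<bar>Q\<bar> * (norm w)"
        proof (rule mult_mono)
          show "\<bar>phid s / s\<bar> \<le> \<bar>Q\<bar>" using Q[OF s] by simp
          have "\<bar>u \<bullet> w\<bar> * norm u \<le> (norm u * norm w) * 1" using inner_bd[of u w] nu
            by (intro mult_mono) auto
          also have "\<dots> \<le> norm w" using nu by (simp add: mult_left_le_one_le)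
          finally show "\<bar>u \<bullet> w\<bar> * norm u \<le> norm w" .
        qed auto
        finally show "\<bar>deriv phi s / s * (u \<bullet> w)\<bar> * norm u \<le> \<bar>Q\<bar> * norm w" .
      qed auto
      also have "\<dots> \<le> (3 * \<bar>m_e \<rho>\<bar> * (\<bar>P\<bar> + \<bar>Q\<bar>) + \<bar>m_e \<rho>\<bar>) * norm w"
        by (simp add: algebra_simps abs_mult)
      finally show ?thesis .
    qed
    have "norm (mass \<rho> u w) \<le> norm (m0 u w) + norm (mf \<rho> u w)"
      unfolding mass_def by (rule norm_triangle_ineq)
    also have "\<dots> \<le> M * norm w" using A B unfolding M_def by (simp add: algebra_simps)
    finally show "norm (mass \<rho> u w) \<le> M * norm w" .
  qed
qed

definition cA :: "(real^3 \<Rightarrow> real) \<Rightarrow> real" where "cA \<rho> = (charge \<rho>)\<^sup>2 / (12 * pi)"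

lemma cA_pos: "charge \<rho> \<noteq> 0 \<Longrightarrow> cA \<rho> > 0"
  unfolding cA_def by simp

lemma acoef_pos:
  assumes "norm u < 1"
  shows "w \<bullet> acoef \<rho> u w \<ge> cA \<rho> * (norm w)\<^sup>2"
proof -
  have g: "gam u ^ 4 \<ge> 1" using gam_ge1[OF assms] by (simp add: one_le_power)
  have "w \<bullet> acoef \<rho> u w = cA \<rho> * (gam u ^ 4 * (norm w)\<^sup>2 + 4 * gam u ^ 6 * (u \<bullet> w)\<^sup>2)"
    unfolding acoef_def cA_def by (simp add: inner_add_right power2_eq_square inner_commute algebra_simps flip: power2_norm_eq_inner)
  also have "\<dots> \<ge> cA \<rho> * (norm w)\<^sup>2"
  proof (rule mult_left_mono)
    have "(norm w)\<^sup>2 \<le> gam u ^ 4 * (norm w)\<^sup>2" using g by (simp add: mult_le_cancel_right1)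
    moreover have "0 \<le> 4 * gam u ^ 6 * (u \<bullet> w)\<^sup>2" using gam_ge1[OF assms] by simp
    ultimately show "(norm w)\<^sup>2 \<le> gam u ^ 4 * (norm w)\<^sup>2 + 4 * gam u ^ 6 * (u \<bullet> w)\<^sup>2" by linarith
  qed (simp add: cA_def)
  finally show ?thesis .
qed

lemma acoef_lower:
  assumes "norm u < 1"
  shows "cA \<rho> * norm w \<le> norm (acoef \<rho> u w)"
proof (cases "w = 0")
  case True thus ?thesis by simp
next
  case False
  have "cA \<rho> * (norm w)\<^sup>2 \<le> w \<bullet> acoef \<rho> u w" by (rule acoef_pos[OF assms])
  also have "\<dots> \<le> norm w * norm (acoef \<rho> u w)" by (rule norm_cauchy_schwarz)
  finally have "(cA \<rho> * norm w) * norm w \<le> norm (acoef \<rho> u w) * norm w"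
    by (simp add: power2_eq_square algebra_simps)
  thus ?thesis using False by simp
qed

lemma acoef_upper:
  assumes ub: "ub < 1"
  shows "\<exists>A. \<forall>u w. norm u \<le> ub \<longrightarrow> norm (acoef \<rho> u w) \<le> A * norm w"
proof -
  define g where "g = 1 / sqrt (1 - ub\<^sup>2)"
  show ?thesis
  proof (intro exI[of _ "cA \<rho> * (g^4 + 4 * g^6)"] allI impI)
    fix u w :: "real^3" assume u: "norm u \<le> ub"
    have u1: "norm u < 1" using u ub by simp
    have g1: "1 \<le> gam u" by (rule gam_ge1[OF u1])
    have g2: "gam u \<le> g" unfolding g_def by (rule gam_le[OF u ub])
    have nu: "norm u \<le> 1" using u1 by simp
    have c0: "cA \<rho> \<ge> 0" by (simp add: cA_def)
    have "norm (acoef \<rho> u w) = cA \<rho> * norm (gam u ^ 4 *\<^sub>R w + (4 * gam u ^ 6 * (u \<bullet> w)) *\<^sub>R u)"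
      unfolding acoef_def cA_def by simp
    also have "\<dots> \<le> cA \<rho> * (\<bar>gam u ^ 4\<bar> * norm w + \<bar>4 * gam u ^ 6 * (u \<bullet> w)\<bar> * norm u)"
      by (intro mult_left_mono norm2_le c0)
    also have "\<dots> \<le> cA \<rho> * (g^4 * norm w + 4 * g^6 * norm w)"
    proof (intro mult_left_mono add_mono c0)
      show "\<bar>gam u ^ 4\<bar> * norm w \<le> g ^ 4 * norm w" using g1 g2
        by (intro mult_right_mono) (auto intro: power_mono)
      have "\<bar>4 * gam u ^ 6 * (u \<bullet> w)\<bar> * norm u = 4 * gam u ^ 6 * (\<bar>u \<bullet> w\<bar> * norm u)"
        using g1 by (simp add: abs_mult)
      also have "\<dots> \<le> 4 * g ^ 6 * norm w"
      proof (intro mult_mono mult_left_mono)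
        show "gam u ^ 6 \<le> g ^ 6" using g1 g2 by (intro power_mono) auto
        have "\<bar>u \<bullet> w\<bar> * norm u \<le> (norm u * norm w) * 1" using inner_bd[of u w] nu
          by (intro mult_mono) auto
        also have "\<dots> \<le> norm w" using nu by (simp add: mult_left_le_one_le)
        finally show "\<bar>u \<bullet> w\<bar> * norm u \<le> norm w" .
      qed (use g1 g2 in auto)
      finally show "\<bar>4 * gam u ^ 6 * (u \<bullet> w)\<bar> * norm u \<le> 4 * g ^ 6 * norm w" .
    qed
    also have "\<dots> = cA \<rho> * (g^4 + 4 * g^6) * norm w" by (simp add: algebra_simps)
    finally show "norm (acoef \<rho> u w) \<le> cA \<rho> * (g^4 + 4 * g^6) * norm w" .
  qed
qed

lemma bcoef_bound:
  assumes ub: "ub < 1"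
  shows "\<exists>B. \<forall>u w. norm u \<le> ub \<longrightarrow> norm (bcoef \<rho> u w) \<le> B * (norm w)\<^sup>2"
proof -
  define g where "g = 1 / sqrt (1 - ub\<^sup>2)"
  define k where "k = (charge \<rho>)\<^sup>2 / (4 * pi)"
  show ?thesis
  proof (intro exI[of _ "k * (2 * g^6 + g^6 + 6 * g^8)"] allI impI)
    fix u w :: "real^3" assume u: "norm u \<le> ub"
    have u1: "norm u < 1" using u ub by simp
    have g1: "1 \<le> gam u" by (rule gam_ge1[OF u1])
    have g2: "gam u \<le> g" unfolding g_def by (rule gam_le[OF u ub])
    have nu: "norm u \<le> 1" using u1 by simp
    have k0: "k \<ge> 0" by (simp add: k_def)
    have iw: "\<bar>u \<bullet> w\<bar> \<le> norm w" using inner_bd[of u w] nu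
      by (metis mult_left_le_one_le norm_ge_zero order_trans mult.commute)
    have "norm (bcoef \<rho> u w) = k * norm ((2 * gam u ^ 6 * (u \<bullet> w)) *\<^sub>R w + (gam u ^ 6 * (norm w)\<^sup>2) *\<^sub>R u
       + (6 * gam u ^ 8 * (u \<bullet> w)\<^sup>2) *\<^sub>R u)"
      unfolding bcoef_def k_def by simp
    also have "\<dots> \<le> k * (norm ((2 * gam u ^ 6 * (u \<bullet> w)) *\<^sub>R w) + norm ((gam u ^ 6 * (norm w)\<^sup>2) *\<^sub>R u)
       + norm ((6 * gam u ^ 8 * (u \<bullet> w)\<^sup>2) *\<^sub>R u))"
      by (intro mult_left_mono k0 order_trans[OF norm_triangle_ineq] add_mono norm_triangle_ineq order_refl)
    also have "\<dots> \<le> k * (2 * g^6 * (norm w)\<^sup>2 + g^6 * (norm w)\<^sup>2 + 6 * g^8 * (norm w)\<^sup>2)"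
    proof (intro mult_left_mono k0 add_mono)
      have p6: "gam u ^ 6 \<le> g ^ 6" "gam u ^ 8 \<le> g ^ 8" using g1 g2 by (auto intro: power_mono)
      have "norm ((2 * gam u ^ 6 * (u \<bullet> w)) *\<^sub>R w) = 2 * gam u ^ 6 * (\<bar>u \<bullet> w\<bar> * norm w)"
        using g1 by (simp add: abs_mult)
      also have "\<dots> \<le> 2 * g ^ 6 * (norm w * norm w)"
        using p6 iw g1 by (intro mult_mono mult_left_mono) auto
      finally show "norm ((2 * gam u ^ 6 * (u \<bullet> w)) *\<^sub>R w) \<le> 2 * g ^ 6 * (norm w)\<^sup>2"
        by (simp add: power2_eq_square)
      have "norm ((gam u ^ 6 * (norm w)\<^sup>2) *\<^sub>R u) = gam u ^ 6 * (norm w)\<^sup>2 * norm u"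
        using g1 by (simp add: abs_mult)
      also have "\<dots> \<le> g ^ 6 * (norm w)\<^sup>2 * 1"
        using p6 nu g1 by (intro mult_mono) auto
      finally show "norm ((gam u ^ 6 * (norm w)\<^sup>2) *\<^sub>R u) \<le> g ^ 6 * (norm w)\<^sup>2" by simp
      have "norm ((6 * gam u ^ 8 * (u \<bullet> w)\<^sup>2) *\<^sub>R u) = 6 * gam u ^ 8 * (u \<bullet> w)\<^sup>2 * norm u"
        using g1 by (simp add: abs_mult)
      also have "\<dots> \<le> 6 * g ^ 8 * (norm w)\<^sup>2 * 1"
      proof (intro mult_mono mult_left_mono)
        show "(u \<bullet> w)\<^sup>2 \<le> (norm w)\<^sup>2" using iw power_mono[of "\<bar>u \<bullet> w\<bar>" "norm w" 2] by simp
      qed (use p6 nu g1 in auto)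
      finally show "norm ((6 * gam u ^ 8 * (u \<bullet> w)\<^sup>2) *\<^sub>R u) \<le> 6 * g ^ 8 * (norm w)\<^sup>2" by simp
    qed
    also have "\<dots> = k * (2 * g^6 + g^6 + 6 * g^8) * (norm w)\<^sup>2" by (simp add: algebra_simps)
    finally show "norm (bcoef \<rho> u w) \<le> k * (2 * g^6 + g^6 + 6 * g^8) * (norm w)\<^sup>2" .
  qed
qed

definition psi :: "real \<Rightarrow> real" where
  "psi y = (if y = 0 then 1/3 else phi (sqrt y) + sqrt y * phid (sqrt y))"

lemma psi_form_cont: "continuous_on {0<..<1} (\<lambda>y. phi (sqrt y) + sqrt y * phid (sqrt y))"
proof -
  have s: "sqrt ` {0<..<1} \<subseteq> {0<..<1::real}" by (auto simp: real_sqrt_lt_1_iff)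
  have "continuous_on {0<..<1} (\<lambda>y. phi (sqrt y))"
    by (rule continuous_on_compose2[OF phi_cont _ s]) (intro continuous_intros)
  moreover have "continuous_on {0<..<1} (\<lambda>y. phid (sqrt y))"
    by (rule continuous_on_compose2[OF phid_cont _ s]) (intro continuous_intros)
  ultimately show ?thesis by (intro continuous_intros)
qed

lemma psi_cont_open: "continuous_on {0<..<1} psi"
  using psi_form_cont by (rule continuous_on_cong[THEN iffD1, rotated 2]) (auto simp: psi_def)

lemma psi_lim: "(psi \<longlongrightarrow> 1/3) (at_right 0)"
proof -
  have "((\<lambda>y. phi (sqrt y) + sqrt y * phid (sqrt y)) \<longlongrightarrow> 1/3) (at_right 0)"
    unfolding phi_def phid_def by real_asymp
  moreover have "eventually (\<lambda>y. phi (sqrt y) + sqrt y * phid (sqrt y) = psi y) (at_right 0)"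
    using eventually_at_right_less[of "0::real"] by eventually_elim (auto simp: psi_def)
  ultimately show ?thesis using Lim_transform_eventually by blast
qed

lemma psi_cont:
  assumes "b < 1" shows "continuous_on {0..b} psi"
proof -
  define b' where "b' = max b (1/2)"
  have b': "0 < b'" "b' < 1" "b \<le> b'" using assms by (auto simp: b'_def)
  have ic: "isCont psi x" if "0 < x" "x < 1" for x
    using psi_cont_open that by (simp add: continuous_on_eq_continuous_at)
  have "continuous_on {0..b'} psi"
  proof (rule continuous_on_IccI)
    show "(psi \<longlongrightarrow> psi 0) (at_right 0)" using psi_lim by (simp add: psi_def)
    show "(psi \<longlongrightarrow> psi b') (at_left b')"
    proof -
      have l: "(psi \<longlongrightarrow> psi b') (at b')" using ic[OF b'(1,2)] continuous_at by blast
      have le: "at_left b' \<le> at b'" using at_le[of "{..<b'}" UNIV b'] by simp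
      show ?thesis using tendsto_mono[OF le l] .
    qed
    show "\<And>x. 0 < x \<Longrightarrow> x < b' \<Longrightarrow> (psi \<longlongrightarrow> psi x) (at x)" proof -
      fix x :: real assume "0 < x" "x < b'"
      hence "isCont psi x" using ic b' by auto
      thus "(psi \<longlongrightarrow> psi x) (at x)" using continuous_at by blast
    qed
  qed (use b' in auto)
  thus ?thesis by (rule continuous_on_subset) (use b' in auto)
qed

lemma mf_inner:
  assumes "norm u < 1"
  shows "u \<bullet> mf \<rho> u w = 3 * m_e \<rho> * psi ((norm u)\<^sup>2) * (u \<bullet> w)"
proof (cases "u = 0")
  case True thus ?thesis by (simp add: mf_def)
next
  case False
  define s where "s = norm u"
  have s: "0 < s" "s < 1" using False assms by (auto simp: s_def)
  have ds: "deriv phi s = phid s" using phi_deriv[of s] s by (intro DERIV_imp_deriv) auto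
  have uu: "u \<bullet> u = s\<^sup>2" by (simp add: s_def power2_norm_eq_inner)
  have ps: "psi ((norm u)\<^sup>2) = phi s + s * phid s" using s by (simp add: psi_def s_def)
  have "u \<bullet> mf \<rho> u w = 3 * m_e \<rho> * (phi s * (u \<bullet> w) + phid s / s * (u \<bullet> w) * (u \<bullet> u))"
    using False by (simp add: mf_def s_def[symmetric] ds inner_add_right)
  also have "\<dots> = 3 * m_e \<rho> * (phi s + s * phid s) * (u \<bullet> w)"
    unfolding uu using s by (simp add: power2_eq_square field_simps)
  finally show ?thesis by (simp add: ps)
qed

lemma hvd_inner:
  assumes "(f has_vector_derivative f') (at t within s)" "(g has_vector_derivative g') (at t within s)"
  shows "((\<lambda>t. f t \<bullet> g t) has_real_derivative (f t \<bullet> g' + f' \<bullet> g t)) (at t within s)"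
proof -
  have "((\<lambda>t. f t \<bullet> g t) has_derivative (\<lambda>h. f t \<bullet> (h *\<^sub>R g') + (h *\<^sub>R f') \<bullet> g t)) (at t within s)"
    using has_derivative_inner[OF assms[unfolded has_vector_derivative_def]] .
  thus ?thesis unfolding has_field_derivative_def
    by (rule has_derivative_eq_rhs) (auto simp: fun_eq_iff algebra_simps)
qed

lemma hvd_chain:
  assumes "(f has_vector_derivative f') (at t within s)" "(g has_derivative (\<lambda>h. G \<bullet> h)) (at (f t))"
  shows "((\<lambda>t. g (f t)) has_real_derivative (G \<bullet> f')) (at t within s)"
proof -
  have "((g \<circ> f) has_vector_derivative (G \<bullet> f')) (at t within s)"
    using vector_derivative_diff_chain_within[OF assms(1) has_derivative_at_withinI[OF assms(2)]] by simp
  thus ?thesis by (simp add: has_real_derivative_iff_has_vector_derivative o_def)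
qed

lemma at_pos: "0 < t \<Longrightarrow> at t within {0..} = at (t::real)"
  by (rule at_within_interior) simp

lemma drop_lemma:
  fixes f f' :: "real \<Rightarrow> real"
  assumes d: "\<And>t. t \<ge> 0 \<Longrightarrow> (f has_real_derivative f' t) (at t within {0..})"
    and ab: "0 \<le> a" "a \<le> b" and k: "\<And>t. a \<le> t \<Longrightarrow> t \<le> b \<Longrightarrow> f' t \<le> -k"
  shows "f b \<le> f a - k * (b - a)"
proof (cases "a = b")
  case True thus ?thesis by simp
next
  case False
  hence ab': "a < b" using ab by simp
  define g where "g t = f t + k * t" for t
  have dg: "(g has_real_derivative (f' t + k)) (at t within {0..})" if "t \<ge> 0" for t
    unfolding g_def[abs_def] using d[OF that] by (auto intro!: derivative_eq_intros)
  have "continuous_on {0..} g"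
    by (rule continuous_on_vector_derivative) (use dg in \<open>auto simp: has_real_derivative_iff_has_vector_derivative\<close>)
  hence cg: "continuous_on {a..b} g" by (rule continuous_on_subset) (use ab in auto)
  have dga: "(g has_real_derivative (f' z + k)) (at z)" if "a < z" for z
    using dg[of z] that ab at_pos[of z] by auto
  obtain l z where z: "a < z" "z < b" "(g has_real_derivative l) (at z)" "g b - g a = (b - a) * l"
    using MVT[OF ab' cg] dga by (meson real_differentiable_def)
  have "l = f' z + k" using DERIV_unique[OF z(3) dga[OF z(1)]] .
  hence "l \<le> 0" using k[of z] z by simp
  hence "g b - g a \<le> 0" using z(4) ab' by (simp add: mult_nonneg_nonpos)
  thus ?thesis by (simp add: g_def algebra_simps)
qed

lemma lip_lemma:
  fixes f f' :: "real \<Rightarrow> 'a::real_normed_vector"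
  assumes d: "\<And>t. t \<ge> 0 \<Longrightarrow> (f has_vector_derivative f' t) (at t within {0..})"
    and B: "\<And>t. t \<ge> 0 \<Longrightarrow> norm (f' t) \<le> B" and st: "0 \<le> s" "0 \<le> t"
  shows "norm (f t - f s) \<le> B * \<bar>t - s\<bar>"
proof -
  have "norm (f t - f s) \<le> B * norm (t - s)"
  proof (rule differentiable_bound[of "{0..}" f "\<lambda>x h. h *\<^sub>R f' x"])
    show "convex {0::real..}" by (rule convex_real_interval)
    show "\<And>x. x \<in> {0..} \<Longrightarrow> (f has_derivative (\<lambda>h. h *\<^sub>R f' x)) (at x within {0..})"
      using d by (auto simp: has_vector_derivative_def)
    show "\<And>x. x \<in> {0..} \<Longrightarrow> onorm (\<lambda>h. h *\<^sub>R f' x) \<le> B"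
    proof (rule onorm_le)
      fix x h :: real assume "x \<in> {0..}"
      hence "norm (f' x) \<le> B" using B by auto
      thus "norm (h *\<^sub>R f' x) \<le> B * norm h" by (simp add: mult.commute[of B] mult_left_mono)
    qed
  qed (use st in auto)
  thus ?thesis by simp
qed

lemma Dpart_cons: "Dpart [i] (Dpart is f) = Dpart (i # is) f" by simp

lemma Ck3_parts:
  assumes "Ck 3 V"
  shows "\<And>i x. (\<lambda>t. V (x + t *\<^sub>R axis i 1)) differentiable at 0"
    and "\<And>i. continuous_on UNIV (Dpart [i] V)"
    and "\<And>i j x. (\<lambda>t. Dpart [j] V (x + t *\<^sub>R axis i 1)) differentiable at 0"
    and "\<And>i j. continuous_on UNIV (Dpart [i] (Dpart [j] V))"
proof -
  have c: "\<forall>is. length is \<le> 3 \<longrightarrow> continuous_on UNIV (Dpart is V)"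
   and d: "\<forall>is i x. length is < 3 \<longrightarrow> (\<lambda>t. Dpart is V (x + t *\<^sub>R axis i 1)) differentiable (at 0)"
    using assms unfolding Ck_def by auto
  show "\<And>i x. (\<lambda>t. V (x + t *\<^sub>R axis i 1)) differentiable at 0"
    using d[rule_format, of "[]"] by simp
  show "\<And>i. continuous_on UNIV (Dpart [i] V)"
    using c[rule_format, of "[i]" for i] by simp
  show "\<And>i j x. (\<lambda>t. Dpart [j] V (x + t *\<^sub>R axis i 1)) differentiable at 0"
    using d[rule_format, of "[j]" for j] by simp
  show "\<And>i j. continuous_on UNIV (Dpart [i] (Dpart [j] V))"
    unfolding Dpart_cons using c[rule_format, of "[i,j]" for i j] by simp
qed

lemma Ck3_V_diff:
  assumes "Ck 3 V" shows "(V has_derivative (\<lambda>h. grad V x \<bullet> h)) (at x)"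
  by (rule frechet) (use Ck3_parts[OF assms] in auto)

lemma Ck3_DV_diff:
  assumes "Ck 3 V" shows "(Dpart [j] V has_derivative (\<lambda>h. grad (Dpart [j] V) x \<bullet> h)) (at x)"
  by (rule frechet) (use Ck3_parts[OF assms] in auto)

lemma gam_alg: "S > 0 \<Longrightarrow> (0 * S - 1 * (inverse S / 2 * (0 - 2 * p))) / (S * S) = (1 / S)^3 * (p::real)"
  by (simp add: field_simps power3_eq_cube)

lemma gam_deriv:
  assumes u: "(u has_vector_derivative u') (at t within s)" and n: "norm (u t) < 1"
  shows "((\<lambda>t. gam (u t)) has_real_derivative (gam (u t))^3 * (u t \<bullet> u')) (at t within s)"
proof -
  have x: "((\<lambda>t. u t \<bullet> u t) has_real_derivative 2 * (u t \<bullet> u')) (at t within s)"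
    using hvd_inner[OF u u] by (simp add: inner_commute)
  have p: "0 < 1 - u t \<bullet> u t" using gam_pos[OF n] by (simp add: power2_norm_eq_inner)
  have "((\<lambda>t. 1 / sqrt (1 - u t \<bullet> u t)) has_real_derivative
      (0 * sqrt (1 - u t \<bullet> u t) - 1 * (inverse (sqrt (1 - u t \<bullet> u t)) / 2 * (0 - 2 * (u t \<bullet> u'))))
       / (sqrt (1 - u t \<bullet> u t) * sqrt (1 - u t \<bullet> u t))) (at t within s)"
  proof (rule DERIV_divide[OF DERIV_const])
    show "((\<lambda>t. sqrt (1 - u t \<bullet> u t)) has_real_derivative inverse (sqrt (1 - u t \<bullet> u t)) / 2 * (0 - 2 * (u t \<bullet> u'))) (at t within s)"
      by (rule DERIV_chain2[where f=sqrt and g="\<lambda>t. 1 - u t \<bullet> u t", OF DERIV_real_sqrt[OF p]])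
         (intro DERIV_diff DERIV_const x)
  qed (use p in auto)
  moreover have "(0 * sqrt (1 - u t \<bullet> u t) - 1 * (inverse (sqrt (1 - u t \<bullet> u t)) / 2 * (0 - 2 * (u t \<bullet> u'))))
       / (sqrt (1 - u t \<bullet> u t) * sqrt (1 - u t \<bullet> u t)) = (1 / sqrt (1 - u t \<bullet> u t))^3 * (u t \<bullet> u')"
    using p by (intro gam_alg) simp
  ultimately have D: "((\<lambda>t. 1 / sqrt (1 - u t \<bullet> u t)) has_real_derivative (1 / sqrt (1 - u t \<bullet> u t))^3 * (u t \<bullet> u')) (at t within s)"
    by simp
  have e: "(\<lambda>t. gam (u t)) = (\<lambda>t. 1 / sqrt (1 - u t \<bullet> u t))"
    by (simp add: fun_eq_iff gam_def power2_norm_eq_inner)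
  have e2: "gam (u t) = 1 / sqrt (1 - u t \<bullet> u t)" by (simp add: gam_def power2_norm_eq_inner)
  show ?thesis unfolding e e2 using D .
qed

lemma energy_alg:
  fixes g xx p q n e c m gV :: real
  assumes h: "g^2 * (1 - xx) = 1"
    and eqn: "g*p + g^3*xx*p + m = -gV + e*(c*(g^4*q + 4*g^6*q*xx)) + e*(3*c*(2*g^6*p^2 + g^6*n*xx + 6*g^8*p^2*xx))"
  shows "g^3*p + m + gV - e*c*((24*g^8 - 12*g^6)*p*p + (4*g^6 - 3*g^4)*(q + n)) = -e*c*(g^6*n + 6*g^8*p^2)"
  using h eqn by algebra

locale traj =
  fixes V :: "real^3 \<Rightarrow> real" and \<rho> :: "real^3 \<Rightarrow> real" and \<epsilon> :: real
    and r u u' u'' :: "real \<Rightarrow> real^3" and ub C1 :: real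
  assumes V_C3: "Ck 3 V"
    and V_cond: "cond_U V \<or> cond_U' V"
    and charge_nz: "charge \<rho> \<noteq> 0"
    and eps: "\<epsilon> > 0"
    and dr: "\<And>t. t \<ge> 0 \<Longrightarrow> (r has_vector_derivative u t) (at t within {0..})"
    and du: "\<And>t. t \<ge> 0 \<Longrightarrow> (u has_vector_derivative u' t) (at t within {0..})"
    and ddu: "\<And>t. t \<ge> 0 \<Longrightarrow> (u' has_vector_derivative u'' t) (at t within {0..})"
    and eq: "\<And>t. t \<ge> 0 \<Longrightarrow>
       mass \<rho> (u t) (u' t) = - grad V (r t) + \<epsilon> *\<^sub>R acoef \<rho> (u t) (u'' t)
                              + \<epsilon> *\<^sub>R bcoef \<rho> (u t) (u' t)"
    and ub0: "0 < ub" and ub1: "ub < 1" and ubd: "\<And>t. t \<ge> 0 \<Longrightarrow> norm (u t) \<le> ub"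
    and C1: "\<And>t. t \<ge> 0 \<Longrightarrow> norm (u' t) \<le> C1"
begin

definition "xx t = u t \<bullet> u t"
definition "pp t = u t \<bullet> u' t"
definition "Gm y = integral {0..y} psi"
definition "W t = gam (u t) + (3 * m_e \<rho> / 2) * Gm (xx t) + V (r t)
   - \<epsilon> * cA \<rho> * (4 * gam (u t) ^ 6 - 3 * gam (u t) ^ 4) * pp t"
definition "Wd t = - \<epsilon> * cA \<rho> * (gam (u t) ^ 6 * (u' t \<bullet> u' t) + 6 * gam (u t) ^ 8 * (pp t)\<^sup>2)"

lemma u1: "t \<ge> 0 \<Longrightarrow> norm (u t) < 1" using ubd[of t] ub1 by simp

lemma xx_range: "t \<ge> 0 \<Longrightarrow> xx t \<in> {0..ub\<^sup>2}"
  using ubd[of t] by (auto simp: xx_def power2_norm_eq_inner[symmetric] power_mono)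

lemma ub2: "ub\<^sup>2 < 1" using ub0 ub1 by (simp add: power_less_one_iff abs_square_less_1)

lemma Gm_deriv: "y \<in> {0..ub\<^sup>2} \<Longrightarrow> (Gm has_real_derivative psi y) (at y within {0..ub\<^sup>2})"
  unfolding Gm_def[abs_def] by (rule integral_has_real_derivative[OF psi_cont[OF ub2]])

lemma mass_inner:
  assumes "norm v < 1"
  shows "v \<bullet> mass \<rho> v w = gam v * (v \<bullet> w) + gam v ^ 3 * (v \<bullet> v) * (v \<bullet> w)
           + 3 * m_e \<rho> * psi ((norm v)\<^sup>2) * (v \<bullet> w)"
  unfolding mass_def inner_add_right mf_inner[OF assms] by (simp add: m0_def inner_add_right)

lemma acoef_inner:
  "v \<bullet> acoef \<rho> v w = cA \<rho> * (gam v ^ 4 * (v \<bullet> w) + 4 * gam v ^ 6 * (v \<bullet> w) * (v \<bullet> v))"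
  by (simp add: acoef_def cA_def inner_add_right algebra_simps)

lemma bcoef_inner:
  "v \<bullet> bcoef \<rho> v w = 3 * cA \<rho> * (2 * gam v ^ 6 * (v \<bullet> w)\<^sup>2 + gam v ^ 6 * (w \<bullet> w) * (v \<bullet> v)
      + 6 * gam v ^ 8 * (v \<bullet> w)\<^sup>2 * (v \<bullet> v))"
  by (simp add: bcoef_def cA_def inner_add_right algebra_simps power2_eq_square flip: power2_norm_eq_inner)

lemma W_deriv:
  assumes t: "t \<ge> 0"
  shows "(W has_real_derivative Wd t) (at t within {0..})"
proof -
  let ?T = "{0::real..}"
  define g where "g = gam (u t)"
  define p where "p = pp t"
  define q where "q = u t \<bullet> u'' t"
  define n where "n = u' t \<bullet> u' t"
  define gV where "gV = grad V (r t) \<bullet> u t"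
  define m where "m = 3 * m_e \<rho> * psi (xx t) * p"
  have n1: "norm (u t) < 1" by (rule u1[OF t])
  have dg: "((\<lambda>t. gam (u t)) has_real_derivative g^3 * p) (at t within ?T)"
    unfolding g_def p_def pp_def by (rule gam_deriv[OF du[OF t] n1])
  have dg6: "((\<lambda>t. gam (u t) ^ 6) has_real_derivative of_nat 6 * (g^3 * p * g ^ (6 - Suc 0))) (at t within ?T)"
    using DERIV_power[OF dg, of 6] unfolding g_def .
  have dg4: "((\<lambda>t. gam (u t) ^ 4) has_real_derivative of_nat 4 * (g^3 * p * g ^ (4 - Suc 0))) (at t within ?T)"
    using DERIV_power[OF dg, of 4] unfolding g_def .
  have dxx: "(xx has_real_derivative 2 * p) (at t within ?T)"
    using hvd_inner[OF du[OF t] du[OF t]] unfolding xx_def[abs_def] p_def pp_def by (simp add: inner_commute)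
  have dpp: "(pp has_real_derivative q + n) (at t within ?T)"
    using hvd_inner[OF du[OF t] ddu[OF t]] unfolding pp_def[abs_def] q_def n_def by (simp only: inner_commute)
  have dGm: "((\<lambda>t. Gm (xx t)) has_real_derivative psi (xx t) * (2 * p)) (at t within ?T)"
  proof -
    have sub: "xx ` ?T \<subseteq> {0..ub\<^sup>2}" using xx_range by blast
    have a: "(Gm has_real_derivative psi (xx t)) (at (xx t) within xx ` ?T)"
      using DERIV_subset[OF Gm_deriv[OF xx_range[OF t]] sub] .
    have "((Gm \<circ> xx) has_real_derivative psi (xx t) * (2 * p)) (at t within ?T)"
      using DERIV_image_chain[OF a dxx] .
    thus ?thesis by (simp only: o_def)
  qed
  have dV: "((\<lambda>t. V (r t)) has_real_derivative gV) (at t within ?T)"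
    unfolding gV_def by (rule hvd_chain[OF dr[OF t] Ck3_V_diff[OF V_C3]])
  have dW: "(W has_real_derivative
      g^3 * p + (3 * m_e \<rho> / 2) * (psi (xx t) * (2 * p)) + gV
      - ((\<epsilon> * cA \<rho> * (4 * (of_nat 6 * (g^3 * p * g ^ (6 - Suc 0))) - 3 * (of_nat 4 * (g^3 * p * g ^ (4 - Suc 0))))) * pp t
         + (q + n) * (\<epsilon> * cA \<rho> * (4 * gam (u t) ^ 6 - 3 * gam (u t) ^ 4)))) (at t within ?T)"
    unfolding W_def[abs_def]
    by (intro DERIV_diff DERIV_add DERIV_mult DERIV_cmult dg dg6 dg4 dGm dV dpp)
  have E: "g*p + g^3*xx t*p + m = -gV + \<epsilon>*(cA \<rho>*(g^4*q + 4*g^6*q*xx t))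
        + \<epsilon>*(3*cA \<rho>*(2*g^6*p^2 + g^6*n*xx t + 6*g^8*p^2*xx t))"
  proof -
    have "u t \<bullet> mass \<rho> (u t) (u' t) = u t \<bullet> (- grad V (r t) + \<epsilon> *\<^sub>R acoef \<rho> (u t) (u'' t)
                              + \<epsilon> *\<^sub>R bcoef \<rho> (u t) (u' t))" using eq[OF t] by simp
    thus ?thesis
      unfolding mass_inner[OF n1] inner_add_right inner_minus_right inner_scaleR_right acoef_inner bcoef_inner
      by (simp add: g_def p_def pp_def q_def n_def gV_def m_def xx_def power2_norm_eq_inner algebra_simps inner_commute[of "u t" "grad V (r t)"])
  qed
  have h: "g^2 * (1 - xx t) = 1" using gam_sq[OF n1] by (simp add: g_def xx_def power2_norm_eq_inner)
  have "g^3*p + m + gV - \<epsilon>*cA \<rho>*((24*g^8 - 12*g^6)*p*p + (4*g^6 - 3*g^4)*(q + n)) = -\<epsilon>*cA \<rho>*(g^6*n + 6*g^8*p^2)"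
    by (rule energy_alg[OF h E])
  moreover have "g^3 * p + (3 * m_e \<rho> / 2) * (psi (xx t) * (2 * p)) + gV
      - ((\<epsilon> * cA \<rho> * (4 * (of_nat 6 * (g^3 * p * g ^ (6 - Suc 0))) - 3 * (of_nat 4 * (g^3 * p * g ^ (4 - Suc 0))))) * pp t
         + (q + n) * (\<epsilon> * cA \<rho> * (4 * gam (u t) ^ 6 - 3 * gam (u t) ^ 4)))
      = g^3*p + m + gV - \<epsilon>*cA \<rho>*((24*g^8 - 12*g^6)*p*p + (4*g^6 - 3*g^4)*(q + n))"
    by (simp add: m_def g_def p_def algebra_simps numeral_eq_Suc)
  moreover have "Wd t = -\<epsilon>*cA \<rho>*(g^6*n + 6*g^8*p^2)"
    by (simp add: Wd_def g_def n_def p_def)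
  ultimately show ?thesis using dW by simp
qed

end

lemma unif_bound:
  fixes f :: "'i::finite \<Rightarrow> 'a \<Rightarrow> real"
  assumes "\<And>i. \<exists>B. \<forall>x\<in>S. \<bar>f i x\<bar> \<le> B"
  shows "\<exists>B. \<forall>i. \<forall>x\<in>S. \<bar>f i x\<bar> \<le> B"
proof -
  obtain Bf where Bf: "\<And>i x. x \<in> S \<Longrightarrow> \<bar>f i x\<bar> \<le> Bf i" using assms by metis
  show ?thesis
  proof (intro exI[of _ "\<Sum>i\<in>UNIV. \<bar>Bf i\<bar>"] allI ballI)
    fix i x assume "x \<in> S"
    hence "\<bar>f i x\<bar> \<le> \<bar>Bf i\<bar>" using Bf[of x i] by simp
    also have "\<dots> \<le> (\<Sum>i\<in>UNIV. \<bar>Bf i\<bar>)" by (rule member_le_sum) auto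
    finally show "\<bar>f i x\<bar> \<le> (\<Sum>i\<in>UNIV. \<bar>Bf i\<bar>)" .
  qed
qed

lemma cont_bdd_cball:
  fixes f :: "real^3 \<Rightarrow> real"
  assumes "continuous_on UNIV f"
  shows "\<exists>B. \<forall>x\<in>cball 0 R. \<bar>f x\<bar> \<le> B"
proof -
  have "compact (f ` cball 0 R)"
    by (rule compact_continuous_image[OF continuous_on_subset[OF assms]]) auto
  thus ?thesis using compact_imp_bounded bounded_real by (metis imageI)
qed

lemma norm_le_sum_comp: "norm (x :: real^'n) \<le> (\<Sum>i\<in>UNIV. \<bar>x$i\<bar>)"
  by (rule norm_le_l1_cart)

lemma V_min:
  assumes "Ck 3 V" "cond_U V \<or> cond_U' V"
  shows "\<exists>Vm. \<forall>x. Vm \<le> V x"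
  using assms(2)
proof
  assume "cond_U V"
  thus ?thesis unfolding cond_U_def bdd_below_def by auto
next
  assume "cond_U' V"
  hence "eventually (\<lambda>x. 0 \<le> V x) at_infinity" unfolding cond_U'_def filterlim_at_top by auto
  then obtain R where R: "\<And>x. R \<le> norm x \<Longrightarrow> 0 \<le> V x" unfolding eventually_at_infinity by auto
  have "continuous_on UNIV V" using assms(1) unfolding Ck_def by (metis Dpart.simps(1) list.size(3) zero_le)
  then obtain B where B: "\<And>x. x \<in> cball 0 R \<Longrightarrow> \<bar>V x\<bar> \<le> B" using cont_bdd_cball by blast
  show ?thesis
  proof (intro exI[of _ "min 0 (-B)"] allI)
    fix x show "min 0 (-B) \<le> V x"
    proof (cases "R \<le> norm x")
      case True thus ?thesis using R by fastforce
    next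
      case False thus ?thesis using B[of x] by (auto simp: dist_norm)
    qed
  qed
qed

context traj
begin

lemma cA0: "cA \<rho> > 0" using cA_pos[OF charge_nz] .

lemma Wd_le: "t \<ge> 0 \<Longrightarrow> Wd t \<le> - (\<epsilon> * cA \<rho>) * (norm (u' t))\<^sup>2"
proof -
  assume t: "t \<ge> 0"
  have g: "gam (u t) ^ 6 \<ge> 1" using gam_ge1[OF u1[OF t]] by (simp add: one_le_power)
  have "(norm (u' t))\<^sup>2 \<le> gam (u t) ^ 6 * (u' t \<bullet> u' t) + 6 * gam (u t) ^ 8 * (pp t)\<^sup>2"
  proof -
    have "(norm (u' t))\<^sup>2 \<le> gam (u t) ^ 6 * (u' t \<bullet> u' t)"
      using g mult_right_mono[OF g, of "u' t \<bullet> u' t"] by (simp add: power2_norm_eq_inner)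
    moreover have "0 \<le> 6 * gam (u t) ^ 8 * (pp t)\<^sup>2" using gam_ge1[OF u1[OF t]] by simp
    ultimately show ?thesis by linarith
  qed
  hence "(\<epsilon> * cA \<rho>) * (norm (u' t))\<^sup>2 \<le> (\<epsilon> * cA \<rho>) * (gam (u t) ^ 6 * (u' t \<bullet> u' t) + 6 * gam (u t) ^ 8 * (pp t)\<^sup>2)"
    using eps cA0 by (intro mult_left_mono) auto
  thus ?thesis unfolding Wd_def by simp
qed

lemma W_drop:
  assumes "0 \<le> a" "a \<le> b" "\<And>t. a \<le> t \<Longrightarrow> t \<le> b \<Longrightarrow> (norm (u' t))\<^sup>2 \<ge> k"
  shows "W b \<le> W a - (\<epsilon> * cA \<rho> * k) * (b - a)"
proof (rule drop_lemma[OF W_deriv assms(1,2)])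
  fix t assume t: "a \<le> t" "t \<le> b"
  have "Wd t \<le> - (\<epsilon> * cA \<rho>) * (norm (u' t))\<^sup>2" using Wd_le t assms(1) by simp
  also have "\<dots> \<le> - (\<epsilon> * cA \<rho> * k)" using assms(3)[OF t] eps cA0 by (simp add: mult_left_mono)
  finally show "Wd t \<le> - (\<epsilon> * cA \<rho> * k)" .
qed simp

lemma W_mono: "0 \<le> a \<Longrightarrow> a \<le> b \<Longrightarrow> W b \<le> W a"
  using W_drop[of a b 0] by simp

lemma Gm_bdd: "\<exists>GB. \<forall>y\<in>{0..ub\<^sup>2}. \<bar>Gm y\<bar> \<le> GB"
proof -
  have "continuous_on {0..ub\<^sup>2} Gm"
    by (rule continuous_on_vector_derivative)
       (use Gm_deriv in \<open>auto simp: has_real_derivative_iff_has_vector_derivative\<close>)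
  hence "compact (Gm ` {0..ub\<^sup>2})" by (intro compact_continuous_image) auto
  thus ?thesis using compact_imp_bounded bounded_real by (metis imageI)
qed

definition "gmax = 1 / sqrt (1 - ub\<^sup>2)"

lemma gam_bds: "t \<ge> 0 \<Longrightarrow> 1 \<le> gam (u t) \<and> gam (u t) \<le> gmax"
  using gam_ge1[OF u1] gam_le[OF ubd ub1] unfolding gmax_def by auto

lemma pp_bd: "t \<ge> 0 \<Longrightarrow> \<bar>pp t\<bar> \<le> \<bar>C1\<bar>"
proof -
  assume t: "t \<ge> 0"
  have "\<bar>pp t\<bar> \<le> norm (u t) * norm (u' t)" unfolding pp_def by (rule inner_bd)
  also have "\<dots> \<le> 1 * \<bar>C1\<bar>" using u1[OF t] C1[OF t] by (intro mult_mono) auto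
  finally show ?thesis by simp
qed

lemma W_parts:
  "\<exists>K. \<forall>t\<ge>0. \<bar>W t - gam (u t) - V (r t)\<bar> \<le> K"
proof -
  obtain GB where GB: "\<And>y. y \<in> {0..ub\<^sup>2} \<Longrightarrow> \<bar>Gm y\<bar> \<le> GB" using Gm_bdd by blast
  define K where "K = \<bar>3 * m_e \<rho> / 2\<bar> * \<bar>GB\<bar> + \<epsilon> * cA \<rho> * (4 * gmax ^ 6 + 3 * gmax ^ 4) * \<bar>C1\<bar>"
  show ?thesis
  proof (intro exI[of _ K] allI impI)
    fix t :: real assume t: "t \<ge> 0"
    have g: "1 \<le> gam (u t)" "gam (u t) \<le> gmax" using gam_bds[OF t] by auto
    have a: "\<bar>(3 * m_e \<rho> / 2) * Gm (xx t)\<bar> \<le> \<bar>3 * m_e \<rho> / 2\<bar> * \<bar>GB\<bar>"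
      unfolding abs_mult using GB[OF xx_range[OF t]] by (intro mult_left_mono) auto
    have "\<bar>4 * gam (u t) ^ 6 - 3 * gam (u t) ^ 4\<bar> \<le> 4 * gam (u t) ^ 6 + 3 * gam (u t) ^ 4"
      using g by (intro abs_diff_le_iff[THEN iffD2] conjI) auto
    also have "\<dots> \<le> 4 * gmax ^ 6 + 3 * gmax ^ 4" using g by (intro add_mono mult_left_mono power_mono) auto
    finally have b0: "\<bar>4 * gam (u t) ^ 6 - 3 * gam (u t) ^ 4\<bar> \<le> 4 * gmax ^ 6 + 3 * gmax ^ 4" .
    have b: "\<bar>\<epsilon> * cA \<rho> * (4 * gam (u t) ^ 6 - 3 * gam (u t) ^ 4) * pp t\<bar>
        \<le> \<epsilon> * cA \<rho> * (4 * gmax ^ 6 + 3 * gmax ^ 4) * \<bar>C1\<bar>"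
      unfolding abs_mult using eps cA0 b0 pp_bd[OF t]
      by (intro mult_mono mult_left_mono) auto
    have "W t - gam (u t) - V (r t) = (3 * m_e \<rho> / 2) * Gm (xx t) - \<epsilon> * cA \<rho> * (4 * gam (u t) ^ 6 - 3 * gam (u t) ^ 4) * pp t"
      unfolding W_def by simp
    thus "\<bar>W t - gam (u t) - V (r t)\<bar> \<le> K" unfolding K_def using a b by linarith
  qed
qed

end

context traj
begin

lemma W_lower: "\<exists>Wl. \<forall>t\<ge>0. Wl \<le> W t"
proof -
  obtain Vm where Vm: "\<And>x. Vm \<le> V x" using V_min[OF V_C3 V_cond] by blast
  obtain K where K: "\<And>t. t \<ge> 0 \<Longrightarrow> \<bar>W t - gam (u t) - V (r t)\<bar> \<le> K" using W_parts by blast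
  show ?thesis
  proof (intro exI[of _ "1 + Vm - K"] allI impI)
    fix t :: real assume t: "t \<ge> 0"
    have "1 \<le> gam (u t)" using gam_bds[OF t] by simp
    thus "1 + Vm - K \<le> W t" using K[OF t] Vm[of "r t"] by linarith
  qed
qed

lemma traj_set:
  "\<exists>S. (\<forall>t\<ge>0. r t \<in> S) \<and> (\<forall>i. \<exists>B. \<forall>x\<in>S. \<bar>Dpart [i] V x\<bar> \<le> B)
       \<and> (\<forall>i j. \<exists>B. \<forall>x\<in>S. \<bar>Dpart [i] (Dpart [j] V) x\<bar> \<le> B)"
  using V_cond
proof
  assume U: "cond_U V"
  have bd: "\<exists>B. \<forall>x. \<bar>Dpart is V x\<bar> \<le> B" if "length is \<le> 3" for "is"
  proof -
    have "bounded (range (Dpart is V))" using U that unfolding cond_U_def by auto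
    thus ?thesis unfolding bounded_real by auto
  qed
  show ?thesis
  proof (intro exI[of _ UNIV] conjI allI)
    show "\<exists>B. \<forall>x\<in>UNIV. \<bar>Dpart [i] V x\<bar> \<le> B" for i using bd[of "[i]"] by simp
    show "\<exists>B. \<forall>x\<in>UNIV. \<bar>Dpart [i] (Dpart [j] V) x\<bar> \<le> B" for i j
      using bd[of "[i, j]"] unfolding Dpart_cons by simp
  qed simp
next
  assume U': "cond_U' V"
  obtain K where K: "\<And>t. t \<ge> 0 \<Longrightarrow> \<bar>W t - gam (u t) - V (r t)\<bar> \<le> K" using W_parts by blast
  have Vb: "V (r t) \<le> W 0 + K" if t: "t \<ge> 0" for t
  proof -
    have "1 \<le> gam (u t)" using gam_bds[OF t] by simp
    moreover have "W t \<le> W 0" using W_mono[OF _ t] by simp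
    ultimately show ?thesis using K[OF t] by linarith
  qed
  have "eventually (\<lambda>x. W 0 + K + 1 \<le> V x) at_infinity"
    using U' unfolding cond_U'_def filterlim_at_top by auto
  then obtain R where R: "\<And>x. R \<le> norm x \<Longrightarrow> W 0 + K + 1 \<le> V x"
    unfolding eventually_at_infinity by auto
  have inS: "r t \<in> cball 0 R" if "t \<ge> 0" for t
  proof (rule ccontr)
    assume "r t \<notin> cball 0 R"
    hence "R \<le> norm (r t)" by (simp add: dist_norm)
    thus False using R Vb[OF that] by fastforce
  qed
  show ?thesis
  proof (intro exI[of _ "cball 0 R"] conjI allI impI)
    show "r t \<in> cball 0 R" if "t \<ge> 0" for t using inS that .
    show "\<exists>B. \<forall>x\<in>cball 0 R. \<bar>Dpart [i] V x\<bar> \<le> B" for i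
      by (rule cont_bdd_cball) (use Ck3_parts(2)[OF V_C3] in auto)
    show "\<exists>B. \<forall>x\<in>cball 0 R. \<bar>Dpart [i] (Dpart [j] V) x\<bar> \<le> B" for i j
      by (rule cont_bdd_cball) (use Ck3_parts(4)[OF V_C3] in auto)
  qed
qed

lemma grad_bounds:
  "\<exists>Kg K2. (\<forall>t\<ge>0. norm (grad V (r t)) \<le> Kg) \<and> (\<forall>t\<ge>0. \<forall>j. norm (grad (Dpart [j] V) (r t)) \<le> K2)"
proof -
  obtain S where S: "\<And>t. t \<ge> 0 \<Longrightarrow> r t \<in> S"
    and b1: "\<And>i. \<exists>B. \<forall>x\<in>S. \<bar>Dpart [i] V x\<bar> \<le> B"
    and b2: "\<And>i j. \<exists>B. \<forall>x\<in>S. \<bar>Dpart [i] (Dpart [j] V) x\<bar> \<le> B"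
    using traj_set by blast
  obtain B1 where B1: "\<And>i x. x \<in> S \<Longrightarrow> \<bar>Dpart [i] V x\<bar> \<le> B1"
    using unif_bound[where f="\<lambda>i x. Dpart [i] V x" and S=S] b1 by blast
  obtain B2 where B2: "\<And>ij x. x \<in> S \<Longrightarrow> \<bar>Dpart [fst ij] (Dpart [snd ij] V) x\<bar> \<le> B2"
    using unif_bound[where f="\<lambda>ij x. Dpart [fst (ij::3\<times>3)] (Dpart [snd ij] V) x" and S=S] b2 by blast
  show ?thesis
  proof (intro exI conjI allI impI)
    fix t :: real assume t: "t \<ge> 0"
    have "norm (grad V (r t)) \<le> (\<Sum>i\<in>UNIV. \<bar>grad V (r t) $ i\<bar>)" by (rule norm_le_l1_cart)
    also have "\<dots> \<le> (\<Sum>i\<in>(UNIV::3 set). B1)"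
      by (rule sum_mono) (use B1 S[OF t] in \<open>simp add: grad_def\<close>)
    finally show "norm (grad V (r t)) \<le> (\<Sum>i\<in>(UNIV::3 set). B1)" .
  next
    fix t :: real and j :: 3 assume t: "t \<ge> 0"
    have "norm (grad (Dpart [j] V) (r t)) \<le> (\<Sum>i\<in>UNIV. \<bar>grad (Dpart [j] V) (r t) $ i\<bar>)" by (rule norm_le_l1_cart)
    also have "\<dots> \<le> (\<Sum>i\<in>(UNIV::3 set). B2)"
      by (rule sum_mono) (use B2[of "r t" "(i, j)" for i] S[OF t] in \<open>simp add: grad_def\<close>)
    finally show "norm (grad (Dpart [j] V) (r t)) \<le> (\<Sum>i\<in>(UNIV::3 set). B2)" .
  qed
qed

lemma acc_eq: "t \<ge> 0 \<Longrightarrow> \<epsilon> *\<^sub>R acoef \<rho> (u t) (u'' t) = grad V (r t) + (mass \<rho> (u t) (u' t) - \<epsilon> *\<^sub>R bcoef \<rho> (u t) (u' t))"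
  using eq by (simp add: algebra_simps)

lemma u''_bound: "\<exists>K3. \<forall>t\<ge>0. norm (u'' t) \<le> K3"
proof -
  obtain Kg where Kg: "\<And>t. t \<ge> 0 \<Longrightarrow> norm (grad V (r t)) \<le> Kg" using grad_bounds by blast
  obtain M where M: "\<And>v w. norm v \<le> ub \<Longrightarrow> norm (mass \<rho> v w) \<le> M * norm w" using mass_bound[OF ub1] by blast
  obtain Bb where Bb: "\<And>v w. norm v \<le> ub \<Longrightarrow> norm (bcoef \<rho> v w) \<le> Bb * (norm w)\<^sup>2" using bcoef_bound[OF ub1] by blast
  define K3 where "K3 = (Kg + \<bar>M\<bar> * \<bar>C1\<bar> + \<epsilon> * (\<bar>Bb\<bar> * C1\<^sup>2)) / (\<epsilon> * cA \<rho>)"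
  show ?thesis
  proof (intro exI[of _ K3] allI impI)
    fix t :: real assume t: "t \<ge> 0"
    have c1: "norm (u' t) \<le> \<bar>C1\<bar>" using C1[OF t] by simp
    have "\<epsilon> * cA \<rho> * norm (u'' t) \<le> \<epsilon> * norm (acoef \<rho> (u t) (u'' t))"
      using acoef_lower[OF u1[OF t]] eps by (simp add: mult.assoc mult_left_mono)
    also have "\<dots> = norm (\<epsilon> *\<^sub>R acoef \<rho> (u t) (u'' t))" using eps by simp
    also have "\<dots> \<le> norm (grad V (r t)) + (norm (mass \<rho> (u t) (u' t)) + norm (\<epsilon> *\<^sub>R bcoef \<rho> (u t) (u' t)))"
      unfolding acc_eq[OF t] by (intro order_trans[OF norm_triangle_ineq] add_left_mono norm_triangle_ineq4)
    also have "\<dots> \<le> Kg + (\<bar>M\<bar> * \<bar>C1\<bar> + \<epsilon> * (\<bar>Bb\<bar> * C1\<^sup>2))"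
    proof (intro add_mono Kg[OF t])
      have "norm (mass \<rho> (u t) (u' t)) \<le> M * norm (u' t)" using M ubd[OF t] by blast
      also have "\<dots> \<le> \<bar>M\<bar> * \<bar>C1\<bar>" using c1 by (intro order_trans[OF abs_ge_self[of "M * norm (u' t)", unfolded abs_mult]] mult_left_mono) auto
      finally show "norm (mass \<rho> (u t) (u' t)) \<le> \<bar>M\<bar> * \<bar>C1\<bar>" .
      have "norm (bcoef \<rho> (u t) (u' t)) \<le> Bb * (norm (u' t))\<^sup>2" using Bb ubd[OF t] by blast
      also have "\<dots> \<le> \<bar>Bb\<bar> * C1\<^sup>2"
      proof -
        have n2: "(norm (u' t))\<^sup>2 \<le> C1\<^sup>2" using c1 power_mono[OF c1, of 2] by simp
        have "Bb * (norm (u' t))\<^sup>2 \<le> \<bar>Bb\<bar> * (norm (u' t))\<^sup>2" by (intro mult_right_mono) auto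
        also have "\<dots> \<le> \<bar>Bb\<bar> * C1\<^sup>2" using n2 by (intro mult_left_mono) auto
        finally show ?thesis .
      qed
      finally show "norm (\<epsilon> *\<^sub>R bcoef \<rho> (u t) (u' t)) \<le> \<epsilon> * (\<bar>Bb\<bar> * C1\<^sup>2)"
        using eps by (simp add: mult_left_mono)
    qed
    finally have "\<epsilon> * cA \<rho> * norm (u'' t) \<le> Kg + \<bar>M\<bar> * \<bar>C1\<bar> + \<epsilon> * (\<bar>Bb\<bar> * C1\<^sup>2)" by simp
    thus "norm (u'' t) \<le> K3" unfolding K3_def using eps cA0 by (simp add: field_simps mult.commute)
  qed
qed

end

lemma key_ineq:
  fixes nw wy ny vw ew \<epsilon> c A \<delta> \<eta> :: real
  assumes pos: "\<epsilon> > 0" "c > 0" "A > 0" "\<delta> > 0" "nw \<ge> 0"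
    and wy: "wy \<ge> \<epsilon> * c * nw\<^sup>2" and ny1: "ny \<le> \<epsilon> * A * nw" and ny2: "ny \<ge> \<delta> / 2"
    and vw: "vw = wy - ew" and ew: "\<bar>ew\<bar> \<le> \<eta> * nw" and eta: "\<eta> \<le> c * \<delta> / (4 * A)"
  shows "vw \<ge> (\<delta> / (2 * \<epsilon> * A)) * (c * \<delta> / (4 * A))"
proof -
  have nw1: "nw \<ge> (\<delta> / 2) / (\<epsilon> * A)" using ny1 ny2 pos by (simp add: field_simps)
  have "\<epsilon> * c * nw \<ge> \<epsilon> * c * ((\<delta> / 2) / (\<epsilon> * A))" using nw1 pos by (intro mult_left_mono) auto
  hence a: "\<epsilon> * c * nw \<ge> c * \<delta> / (2 * A)" using pos by (simp add: field_simps)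
  have b: "\<epsilon> * c * nw - \<eta> \<ge> c * \<delta> / (4 * A)" using a eta by (simp add: field_simps)
  have "vw \<ge> \<epsilon> * c * nw\<^sup>2 - \<eta> * nw" using wy vw ew by linarith
  also have "\<epsilon> * c * nw\<^sup>2 - \<eta> * nw = nw * (\<epsilon> * c * nw - \<eta>)" by (simp add: power2_eq_square algebra_simps)
  also have "\<dots> \<ge> nw * (c * \<delta> / (4 * A))" using b pos by (intro mult_left_mono) auto
  also have "nw * (c * \<delta> / (4 * A)) \<ge> ((\<delta> / 2) / (\<epsilon> * A)) * (c * \<delta> / (4 * A))"
    using nw1 pos by (intro mult_right_mono) auto
  finally show ?thesis by (simp add: field_simps)
qed

context traj
begin

lemma frequent:
  fixes f :: "real \<Rightarrow> 'a::real_normed_vector"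
  assumes "\<not> (f \<longlongrightarrow> 0) at_top"
  shows "\<exists>\<delta>>0. \<forall>T. \<exists>t\<ge>T. norm (f t) \<ge> \<delta>"
proof -
  from assms obtain \<delta> where d: "\<delta> > 0" "\<not> eventually (\<lambda>t. dist (f t) 0 < \<delta>) at_top"
    unfolding tendsto_iff by blast
  have "\<exists>t\<ge>T. norm (f t) \<ge> \<delta>" for T :: real
  proof (rule ccontr)
    assume "\<not> ?thesis"
    hence "\<forall>t\<ge>T. dist (f t) 0 < \<delta>" by auto
    hence "eventually (\<lambda>t. dist (f t) 0 < \<delta>) at_top" unfolding eventually_at_top_linorder by blast
    thus False using d by blast
  qed
  thus ?thesis using d by blast
qed

lemma u'_lim: "(u' \<longlongrightarrow> 0) at_top"
proof (rule ccontr)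
  assume nl: "\<not> (u' \<longlongrightarrow> 0) at_top"
  obtain K3 where K3: "\<And>t. t \<ge> 0 \<Longrightarrow> norm (u'' t) \<le> K3" using u''_bound by blast
  have K30: "K3 \<ge> 0" using K3[of 0] norm_ge_zero[of "u'' 0"] by linarith
  obtain Wl where Wl: "\<And>t. t \<ge> 0 \<Longrightarrow> Wl \<le> W t" using W_lower by blast
  obtain \<delta> where d: "\<delta> > 0" and freq: "\<And>T. \<exists>t\<ge>T. norm (u' t) \<ge> \<delta>" using frequent[OF nl] by blast
  define h where "h = \<delta> / (2 * (K3 + 1))"
  have h0: "h > 0" using d K30 by (simp add: h_def)
  have Kh: "K3 * h \<le> \<delta> / 2"
  proof -
    have "K3 * h = (\<delta> / 2) * (K3 / (K3 + 1))" using K30 by (simp add: h_def field_simps)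
    also have "\<dots> \<le> (\<delta> / 2) * 1" using K30 d by (intro mult_left_mono) auto
    finally show ?thesis by simp
  qed
  define \<kappa> where "\<kappa> = \<epsilon> * cA \<rho> * (\<delta> / 2)\<^sup>2 * h"
  have k0: "\<kappa> > 0" using eps cA0 d h0 by (simp add: \<kappa>_def)
  have step: "\<exists>T'\<ge>T. W T' \<le> W T - \<kappa>" if T: "T \<ge> 0" for T
  proof -
    obtain t where t: "t \<ge> T" "norm (u' t) \<ge> \<delta>" using freq by blast
    have t0: "t \<ge> 0" using t T by simp
    have big: "(\<delta> / 2)\<^sup>2 \<le> (norm (u' s))\<^sup>2" if s: "t \<le> s" "s \<le> t + h" for s
    proof -
      have "norm (u' s - u' t) \<le> K3 * \<bar>s - t\<bar>" by (rule lip_lemma[OF ddu K3]) (use t0 s in auto)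
      also have "\<dots> \<le> K3 * h" using s K30 by (intro mult_left_mono) auto
      finally have "norm (u' s - u' t) \<le> \<delta> / 2" using Kh by simp
      moreover have "norm (u' t) - norm (u' s) \<le> norm (u' s - u' t)"
        using norm_triangle_ineq2[of "u' t" "u' s"] by (simp add: norm_minus_commute)
      ultimately have "\<delta> / 2 \<le> norm (u' s)" using t(2) by linarith
      thus ?thesis using d by (intro power_mono) auto
    qed
    have "W (t + h) \<le> W t - (\<epsilon> * cA \<rho> * (\<delta> / 2)\<^sup>2) * ((t + h) - t)"
      by (rule W_drop) (use t0 h0 big in auto)
    hence "W (t + h) \<le> W t - \<kappa>" by (simp add: \<kappa>_def)
    moreover have "W t \<le> W T" using W_mono T t by auto
    ultimately show ?thesis using t h0 by (intro exI[of _ "t + h"]) auto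
  qed
  have iter: "\<exists>T\<ge>0. W T \<le> W 0 - real N * \<kappa>" for N
  proof (induction N)
    case 0 show ?case by (intro exI[of _ 0]) simp
  next
    case (Suc N)
    then obtain T where T: "T \<ge> 0" "W T \<le> W 0 - real N * \<kappa>" by blast
    with step obtain T' where T': "T' \<ge> T" "W T' \<le> W T - \<kappa>" by blast
    have "W T' \<le> W 0 - real (Suc N) * \<kappa>" using T T' by (simp add: algebra_simps)
    thus ?case using T T' by (intro exI[of _ T']) auto
  qed
  obtain N where N: "W 0 - Wl < real N * \<kappa>" using ex_less_of_nat_mult[OF k0] by blast
  obtain T where T: "T \<ge> 0" "W T \<le> W 0 - real N * \<kappa>" using iter by blast
  show False using Wl[OF T(1)] T N by linarith
qed

end

context traj
begin

lemma g_lip: "\<exists>L\<ge>0. \<forall>s t. s \<ge> 0 \<longrightarrow> t \<ge> 0 \<longrightarrow> norm (grad V (r t) - grad V (r s)) \<le> L * \<bar>t - s\<bar>"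
proof -
  obtain K2 where K2: "\<And>t j. t \<ge> 0 \<Longrightarrow> norm (grad (Dpart [j] V) (r t)) \<le> K2"
    using grad_bounds by blast
  have K20: "K2 \<ge> 0" using K2[of 0] norm_ge_zero order_trans by blast
  have comp: "\<bar>Dpart [j] V (r t) - Dpart [j] V (r s)\<bar> \<le> K2 * \<bar>t - s\<bar>" if st: "s \<ge> 0" "t \<ge> 0" for s t j
  proof -
    have d: "((\<lambda>t. Dpart [j] V (r t)) has_vector_derivative (grad (Dpart [j] V) (r t) \<bullet> u t)) (at t within {0..})"
      if "t \<ge> 0" for t
      using hvd_chain[OF dr[OF that] Ck3_DV_diff[OF V_C3]]
      by (simp add: has_real_derivative_iff_has_vector_derivative)
    have b: "norm (grad (Dpart [j] V) (r t) \<bullet> u t) \<le> K2" if "t \<ge> 0" for t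
    proof -
      have "norm (grad (Dpart [j] V) (r t) \<bullet> u t) \<le> norm (grad (Dpart [j] V) (r t)) * norm (u t)"
        by (simp add: inner_bd)
      also have "\<dots> \<le> K2 * 1" using K2[OF that] u1[OF that] K20 by (intro mult_mono) auto
      finally show ?thesis by simp
    qed
    show ?thesis using lip_lemma[OF d b st] by simp
  qed
  show ?thesis
  proof (intro exI[of _ "3 * K2"] conjI allI impI)
    show "0 \<le> 3 * K2" using K20 by simp
    fix s t :: real assume st: "s \<ge> 0" "t \<ge> 0"
    have "norm (grad V (r t) - grad V (r s)) \<le> (\<Sum>j\<in>UNIV. \<bar>(grad V (r t) - grad V (r s)) $ j\<bar>)"
      by (rule norm_le_l1_cart)
    also have "\<dots> \<le> (\<Sum>j\<in>(UNIV::3 set). K2 * \<bar>t - s\<bar>)"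
      by (rule sum_mono) (use comp[OF st] in \<open>simp add: grad_def\<close>)
    also have "\<dots> = 3 * K2 * \<bar>t - s\<bar>" by simp
    finally show "norm (grad V (r t) - grad V (r s)) \<le> 3 * K2 * \<bar>t - s\<bar>" .
  qed
qed

definition "ee t = mass \<rho> (u t) (u' t) - \<epsilon> *\<^sub>R bcoef \<rho> (u t) (u' t)"

lemma ee_lim: "(ee \<longlongrightarrow> 0) at_top"
proof -
  obtain M where M: "\<And>v w. norm v \<le> ub \<Longrightarrow> norm (mass \<rho> v w) \<le> M * norm w" using mass_bound[OF ub1] by blast
  obtain Bb where Bb: "\<And>v w. norm v \<le> ub \<Longrightarrow> norm (bcoef \<rho> v w) \<le> Bb * (norm w)\<^sup>2" using bcoef_bound[OF ub1] by blast
  have n: "((\<lambda>t. norm (u' t)) \<longlongrightarrow> 0) at_top" using tendsto_norm[OF u'_lim] by simp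
  have lim: "((\<lambda>t. \<bar>M\<bar> * norm (u' t) + \<epsilon> * (\<bar>Bb\<bar> * (norm (u' t))\<^sup>2)) \<longlongrightarrow> 0) at_top"
  proof -
    have n2: "((\<lambda>t. (norm (u' t))\<^sup>2) \<longlongrightarrow> 0) at_top" using tendsto_power[OF n, of 2] by simp
    show ?thesis
      using tendsto_add[OF tendsto_mult_right_zero[OF n] tendsto_mult_right_zero[OF tendsto_mult_right_zero[OF n2]]]
      by simp
  qed
  have ev: "eventually (\<lambda>t. norm (ee t) \<le> \<bar>M\<bar> * norm (u' t) + \<epsilon> * (\<bar>Bb\<bar> * (norm (u' t))\<^sup>2)) at_top"
    unfolding eventually_at_top_linorder
  proof (intro exI[of _ 0] allI impI)
    fix t :: real assume t: "t \<ge> 0"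
    have "norm (ee t) \<le> norm (mass \<rho> (u t) (u' t)) + norm (\<epsilon> *\<^sub>R bcoef \<rho> (u t) (u' t))"
      unfolding ee_def by (rule norm_triangle_ineq4)
    also have "\<dots> \<le> \<bar>M\<bar> * norm (u' t) + \<epsilon> * (\<bar>Bb\<bar> * (norm (u' t))\<^sup>2)"
    proof (intro add_mono)
      have "norm (mass \<rho> (u t) (u' t)) \<le> M * norm (u' t)" using M ubd[OF t] by blast
      also have "\<dots> \<le> \<bar>M\<bar> * norm (u' t)" by (intro mult_right_mono) auto
      finally show "norm (mass \<rho> (u t) (u' t)) \<le> \<bar>M\<bar> * norm (u' t)" .
      have "norm (bcoef \<rho> (u t) (u' t)) \<le> Bb * (norm (u' t))\<^sup>2" using Bb ubd[OF t] by blast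
      also have "\<dots> \<le> \<bar>Bb\<bar> * (norm (u' t))\<^sup>2" by (intro mult_right_mono) auto
      finally show "norm (\<epsilon> *\<^sub>R bcoef \<rho> (u t) (u' t)) \<le> \<epsilon> * (\<bar>Bb\<bar> * (norm (u' t))\<^sup>2)"
        using eps by (simp add: mult_left_mono)
    qed
    finally show "norm (ee t) \<le> \<bar>M\<bar> * norm (u' t) + \<epsilon> * (\<bar>Bb\<bar> * (norm (u' t))\<^sup>2)" .
  qed
  show ?thesis by (rule Lim_null_comparison[OF ev lim])
qed

lemma acc_eq2: "t \<ge> 0 \<Longrightarrow> \<epsilon> *\<^sub>R acoef \<rho> (u t) (u'' t) = grad V (r t) + ee t"
  unfolding ee_def by (rule acc_eq)

lemma g_lim: "((\<lambda>t. grad V (r t)) \<longlongrightarrow> 0) at_top"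
proof (rule ccontr)
  assume nl: "\<not> ((\<lambda>t. grad V (r t)) \<longlongrightarrow> 0) at_top"
  obtain \<delta> where d: "\<delta> > 0" and freq: "\<And>T. \<exists>t\<ge>T. norm (grad V (r t)) \<ge> \<delta>"
    using frequent[OF nl] by blast
  obtain Kg where Kg: "\<And>t. t \<ge> 0 \<Longrightarrow> norm (grad V (r t)) \<le> Kg" using grad_bounds by blast
  have Kg0: "Kg \<ge> 0" using Kg[of 0] norm_ge_zero order_trans by blast
  obtain L where L0: "L \<ge> 0" and Lg: "\<And>s t. s \<ge> 0 \<Longrightarrow> t \<ge> 0 \<Longrightarrow> norm (grad V (r t) - grad V (r s)) \<le> L * \<bar>t - s\<bar>"
    using g_lip by blast
  obtain A where A: "\<And>v w. norm v \<le> ub \<Longrightarrow> norm (acoef \<rho> v w) \<le> A * norm w" using acoef_upper[OF ub1] by blast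
  define A' where "A' = \<bar>A\<bar> + 1"
  have A'0: "A' > 0" by (simp add: A'_def)
  have A': "norm (acoef \<rho> v w) \<le> A' * norm w" if "norm v \<le> ub" for v w
  proof -
    have "A * norm w \<le> A' * norm w" unfolding A'_def by (intro mult_right_mono) auto
    thus ?thesis using A[OF that, of w] by linarith
  qed
  define \<eta> where "\<eta> = min (\<delta> / 2) (cA \<rho> * \<delta> / (4 * A'))"
  have eta0: "\<eta> > 0" using d cA0 A'0 by (simp add: \<eta>_def)
  define h where "h = \<eta> / (2 * (L + 1))"
  have h0: "h > 0" using eta0 L0 by (simp add: h_def)
  have Lh: "L * h \<le> \<eta> / 2"
  proof -
    have "L * h = (\<eta> / 2) * (L / (L + 1))" using L0 by (simp add: h_def field_simps)
    also have "\<dots> \<le> (\<eta> / 2) * 1" using L0 eta0 by (intro mult_left_mono) auto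
    finally show ?thesis by simp
  qed
  define \<kappa> where "\<kappa> = (\<delta> / (2 * \<epsilon> * A')) * (cA \<rho> * \<delta> / (4 * A'))"
  have k0: "\<kappa> > 0" using d eps A'0 cA0 by (simp add: \<kappa>_def)
  define \<zeta> where "\<zeta> = \<kappa> * h / (4 * (Kg + 1))"
  have z0: "\<zeta> > 0" using k0 h0 Kg0 by (simp add: \<zeta>_def)
  obtain T1 where T1: "\<And>s. s \<ge> T1 \<Longrightarrow> norm (ee s) \<le> \<eta> / 2"
  proof -
    have "eventually (\<lambda>s. dist (ee s) 0 < \<eta> / 2) at_top" using tendstoD[OF ee_lim, of "\<eta> / 2"] eta0 by simp
    thus ?thesis using that unfolding eventually_at_top_linorder by fastforce
  qed
  obtain T2 where T2: "\<And>s. s \<ge> T2 \<Longrightarrow> norm (u' s) \<le> \<zeta>"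
  proof -
    have "eventually (\<lambda>s. dist (u' s) 0 < \<zeta>) at_top" using tendstoD[OF u'_lim, of \<zeta>] z0 by simp
    thus ?thesis using that unfolding eventually_at_top_linorder by fastforce
  qed
  obtain t where t: "t \<ge> max (max T1 T2) 0" "norm (grad V (r t)) \<ge> \<delta>" using freq by blast
  have t0: "t \<ge> 0" using t by simp
  define v where "v = grad V (r t)"
  have vw: "v \<bullet> u'' s \<ge> \<kappa>" if s: "t \<le> s" "s \<le> t + h" for s
  proof -
    have s0: "s \<ge> 0" using s t0 by simp
    define w where "w = u'' s"
    define y where "y = \<epsilon> *\<^sub>R acoef \<rho> (u s) w"
    have y: "y = grad V (r s) + ee s" unfolding y_def w_def by (rule acc_eq2[OF s0])
    define e' where "e' = y - v"
    have "norm e' \<le> norm (grad V (r s) - v) + norm (ee s)"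
      unfolding e'_def y by (metis add_diff_eq diff_add_eq norm_triangle_ineq)
    also have "\<dots> \<le> L * h + \<eta> / 2"
    proof (intro add_mono)
      have "norm (grad V (r s) - v) \<le> L * \<bar>s - t\<bar>" unfolding v_def by (rule Lg[OF t0 s0])
      also have "\<dots> \<le> L * h" using s L0 by (intro mult_left_mono) auto
      finally show "norm (grad V (r s) - v) \<le> L * h" .
      show "norm (ee s) \<le> \<eta> / 2" using T1 t s by simp
    qed
    finally have ne: "norm e' \<le> \<eta>" using Lh by simp
    have wy: "w \<bullet> y \<ge> \<epsilon> * cA \<rho> * (norm w)\<^sup>2"
      using acoef_pos[OF u1[OF s0], where w=w and \<rho>=\<rho>] eps unfolding y_def
      by (simp add: mult_left_mono mult.assoc)
    have ny1: "norm y \<le> \<epsilon> * A' * norm w"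
      using A'[OF ubd[OF s0], of w] eps unfolding y_def by (simp add: mult_left_mono mult.assoc)
    have ny2: "norm y \<ge> \<delta> / 2"
    proof -
      have "norm v - norm e' \<le> norm y" unfolding e'_def using norm_triangle_ineq2[of v "v - y"]
        by (simp add: norm_minus_commute)
      moreover have "norm v \<ge> \<delta>" using t by (simp add: v_def)
      moreover have "\<eta> \<le> \<delta> / 2" by (simp add: \<eta>_def)
      ultimately show ?thesis using ne by linarith
    qed
    have vweq: "v \<bullet> w = w \<bullet> y - w \<bullet> e'" unfolding e'_def by (simp add: inner_diff_right inner_commute)
    have ew: "\<bar>w \<bullet> e'\<bar> \<le> \<eta> * norm w"
    proof -
      have "\<bar>w \<bullet> e'\<bar> \<le> norm w * norm e'" by (rule inner_bd)
      also have "\<dots> \<le> norm w * \<eta>" using ne by (intro mult_left_mono) auto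
      finally show ?thesis by (simp add: mult.commute)
    qed
    have eta2: "\<eta> \<le> cA \<rho> * \<delta> / (4 * A')" by (simp add: \<eta>_def)
    have "v \<bullet> w \<ge> (\<delta> / (2 * \<epsilon> * A')) * (cA \<rho> * \<delta> / (4 * A'))"
      by (rule key_ineq[OF eps cA0 A'0 d norm_ge_zero wy ny1 ny2 vweq ew eta2])
    thus ?thesis by (simp add: \<kappa>_def w_def)
  qed
  have dphi: "((\<lambda>s. - (v \<bullet> u' s)) has_real_derivative - (v \<bullet> u'' s)) (at s within {0..})" if "s \<ge> 0" for s
  proof -
    have "((\<lambda>s. v \<bullet> u' s) has_real_derivative (v \<bullet> u'' s + 0 \<bullet> u' s)) (at s within {0..})"
      by (rule hvd_inner[OF has_vector_derivative_const ddu[OF that]])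
    thus ?thesis by (intro DERIV_minus) simp
  qed
  have "- (v \<bullet> u' (t + h)) \<le> - (v \<bullet> u' t) - \<kappa> * ((t + h) - t)"
    by (rule drop_lemma[OF dphi t0]) (use h0 vw in auto)
  hence gap: "v \<bullet> u' (t + h) - v \<bullet> u' t \<ge> \<kappa> * h" by simp
  have bv: "\<bar>v \<bullet> u' s\<bar> \<le> Kg * \<zeta>" if "s \<ge> t" for s
  proof -
    have "\<bar>v \<bullet> u' s\<bar> \<le> norm v * norm (u' s)" by (rule inner_bd)
    also have "\<dots> \<le> Kg * \<zeta>" using Kg[OF t0] T2[of s] t that Kg0 by (intro mult_mono) (auto simp: v_def)
    finally show ?thesis .
  qed
  have "\<kappa> * h \<le> 2 * (Kg * \<zeta>)" using gap bv[of t] bv[of "t + h"] h0 by linarith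
  also have "2 * (Kg * \<zeta>) = (\<kappa> * h) * (Kg / (2 * (Kg + 1)))" using Kg0 by (simp add: \<zeta>_def field_simps)
  also have "\<dots> < (\<kappa> * h) * 1"
  proof (rule mult_strict_left_mono)
    show "Kg / (2 * (Kg + 1)) < 1" using Kg0 by (simp add: field_simps)
  qed (use k0 h0 in simp)
  finally show False by simp
qed

lemma u''_lim: "(u'' \<longlongrightarrow> 0) at_top"
proof -
  have lim: "((\<lambda>t. norm (grad V (r t) + ee t) / (\<epsilon> * cA \<rho>)) \<longlongrightarrow> 0) at_top"
    using tendsto_divide[OF tendsto_norm[OF tendsto_add[OF g_lim ee_lim]] tendsto_const, of "\<epsilon> * cA \<rho>"]
      eps cA0 by simp
  have ev: "eventually (\<lambda>t. norm (u'' t) \<le> norm (grad V (r t) + ee t) / (\<epsilon> * cA \<rho>)) at_top"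
    unfolding eventually_at_top_linorder
  proof (intro exI[of _ 0] allI impI)
    fix t :: real assume t: "t \<ge> 0"
    have "\<epsilon> * cA \<rho> * norm (u'' t) \<le> \<epsilon> * norm (acoef \<rho> (u t) (u'' t))"
      using acoef_lower[OF u1[OF t]] eps by (simp add: mult.assoc mult_left_mono)
    also have "\<dots> = norm (grad V (r t) + ee t)" using acc_eq2[OF t] eps
      by (metis abs_of_pos norm_scaleR)
    finally show "norm (u'' t) \<le> norm (grad V (r t) + ee t) / (\<epsilon> * cA \<rho>)"
      using eps cA0 by (simp add: field_simps mult.commute)
  qed
  show ?thesis by (rule Lim_null_comparison[OF ev lim])
qed

end

theorem theorem4p3:
  fixes V \<rho> :: "real^3 \<Rightarrow> real" and \<epsilon> :: real
    and r u u' u'' :: "real \<Rightarrow> real^3"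
  assumes V_C3: "Ck 3 V"
    and V_cond: "cond_U V \<or> cond_U' V"
    and rho: "admissible_rho \<rho>" and charge_nz: "charge \<rho> \<noteq> 0"
    and eps: "\<epsilon> > 0"
    and dr: "\<And>t. t \<ge> 0 \<Longrightarrow> (r has_vector_derivative u t) (at t within {0..})"
    and du: "\<And>t. t \<ge> 0 \<Longrightarrow> (u has_vector_derivative u' t) (at t within {0..})"
    and ddu: "\<And>t. t \<ge> 0 \<Longrightarrow> (u' has_vector_derivative u'' t) (at t within {0..})"
    and eq: "\<And>t. t \<ge> 0 \<Longrightarrow>
       mass \<rho> (u t) (u' t) = - grad V (r t) + \<epsilon> *\<^sub>R acoef \<rho> (u t) (u'' t)
                              + \<epsilon> *\<^sub>R bcoef \<rho> (u t) (u' t)"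
    and ubar: "\<exists>ub<1. \<forall>t\<ge>0. norm (u t) \<le> ub"
    and cbound: "\<exists>c. \<forall>t\<ge>0. norm (u' t) \<le> c"
  shows "(u' \<longlongrightarrow> 0) at_top \<and> (u'' \<longlongrightarrow> 0) at_top
         \<and> ((\<lambda>t. grad V (r t)) \<longlongrightarrow> 0) at_top"
proof -
  obtain ub0 where ub0: "ub0 < 1" "\<And>t. t \<ge> 0 \<Longrightarrow> norm (u t) \<le> ub0" using ubar by blast
  obtain c where c: "\<And>t. t \<ge> 0 \<Longrightarrow> norm (u' t) \<le> c" using cbound by blast
  define ub where "ub = max ub0 (1/2)"
  have ubp: "0 < ub" "ub < 1" using ub0 by (auto simp: ub_def)
  have ubd: "\<And>t. t \<ge> 0 \<Longrightarrow> norm (u t) \<le> ub" using ub0 by (force simp: ub_def)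
  interpret traj V \<rho> \<epsilon> r u u' u'' ub c
    by (unfold_locales) (use V_C3 V_cond charge_nz eps dr du ddu eq ubp ubd c in auto)
  show ?thesis using u'_lim u''_lim g_lim by simp
qed

end
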